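(* Assume the hypotheses of Theorem 3 (see context). Then for every $\eta>0$, $$\mathbb{P}\Big(|s_{j,n}^2-v_j|\le\eta\,v_j\ \text{ for all } j=1,\dots,m_n\Big)\ge 1-\frac{4C}{\eta^2}n^{-\varepsilon_1}\to1\quad(n\to\infty).$$ Consequently $\mathbb{P}\big(\tfrac{d_j}{2}\le d_{j,n}\le 2d_j\ \text{for all } j=1,\dots,m_n\big)\to1$ and $\mathbb{P}\big(|\sqrt n\,\delta_n'-\gamma|\le\gamma/2\big)\to1$ as $n\to\infty$, where $\gamma:=\sqrt{\sum_{j=1}^\infty d_j^2v_j}$.
   Context: Setting: $K:\mathcal{X}\to\mathcal{Y}$ compact linear between infinite-dimensional real separable Hilbert spaces, dense range, singular value decomposition $(\sigma_j,u_j,v_j)$ with $\sigma_j>0$ nonincreasing to $0$. $Y_1,Y_2,\dots$ are i.i.d. $\mathcal{Y}$-valued with $\mathbb{E}Y_1=\hat y$; $q>p-1>0$, $\sigma_j^2\asymp j^{-q}$, $0<v_j:=\mathbb{E}(Y_1-\hat y,u_j)^2\le C_pj^{-p}$, $\mathbb{E}(Y_1-\hat y,u_j)^4\le Cv_j^2$ for all $j$; $0<\varepsilon_1<1$, $0<\varepsilon_2<\min(1,p-1)$. $\bar Y_n:=\frac1n\sum_{i\le n}Y_i$, $m_n:=\lfloor n^{1-\varepsilon_1}\rfloor$, $s_{j,n}^2:=\frac1{n-1}\sum_{i=1}^n(Y_i-\bar Y_n,u_j)^2$, $S_n:=\sum_{j'=1}^{m_n}s_{j',n}^2$. Random weights: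 $d_{1,n}:=\sqrt{\min(S_n/s_{1,n}^2,1/\sigma_1^2)}$, $d_{j,n}:=\sqrt{\min(j^{-(1+\varepsilon_2)}S_n/s_{j,n}^2,\ \sigma_{j-1}^2d_{j-1,n}^2/\sigma_j^2)}$ for $2\le j\le m_n$; $\delta_n':=\sqrt{\frac1n\sum_{j=1}^{m_n}d_{j,n}^2s_{j,n}^2}$. Deterministic weights: $V:=\mathbb{E}\|Y_1-\hat y\|^2$, $d_1:=\sqrt{\min(V/v_1,1/\sigma_1^2)}$, $d_j:=\sqrt{\min(j^{-(1+\varepsilon_2)}V/v_j,\ \sigma_{j-1}^2d_{j-1}^2/\sigma_j^2)}$ for $j>1$. *)

theory Defs
  imports "HOL-Probability.Probability"
begin

definition compact_linear_op :: "('x::real_normed_vector \<Rightarrow> 'y::real_normed_vector) \<Rightarrow> bool" where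
  "compact_linear_op K \<longleftrightarrow> linear K \<and> compact (closure (K ` cball 0 1))"

text \<open>Generic recursion for the squared weights (indices start at 1):
  w 1 = min (S / s 1) (1 / sigma 1 ^ 2),
  w j = min (j powr (-(1+e)) * S / s j) (sigma (j-1)^2 * w (j-1) / sigma j ^ 2) for j >= 2.
  The weights of the paper are the square roots of these values.\<close>
fun wsq :: "(nat \<Rightarrow> real) \<Rightarrow> real \<Rightarrow> real \<Rightarrow> (nat \<Rightarrow> real) \<Rightarrow> nat \<Rightarrow> real" where
  "wsq \<sigma> e S s 0 = 0"
| "wsq \<sigma> e S s (Suc 0) = min (S / s 1) (1 / (\<sigma> 1)\<^sup>2)"
| "wsq \<sigma> e S s (Suc (Suc k)) =
     min (real (Suc (Suc k)) powr (-(1 + e)) * S / s (Suc (Suc k)))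
         ((\<sigma> (Suc k))\<^sup>2 * wsq \<sigma> e S s (Suc k) / (\<sigma> (Suc (Suc k)))\<^sup>2)"

text \<open>Weight function d_j (deterministic when S = V and s = v, random when S = S_n and s = s^2_{.,n}).\<close>
definition weight :: "(nat \<Rightarrow> real) \<Rightarrow> real \<Rightarrow> real \<Rightarrow> (nat \<Rightarrow> real) \<Rightarrow> nat \<Rightarrow> real" where
  "weight \<sigma> e S s j = sqrt (wsq \<sigma> e S s j)"

definition mcut :: "real \<Rightarrow> nat \<Rightarrow> nat" where
  "mcut \<epsilon>1 n = nat \<lfloor>real n powr (1 - \<epsilon>1)\<rfloor>"

definition sample_mean :: "(nat \<Rightarrow> 'a \<Rightarrow> 'y::real_vector) \<Rightarrow> nat \<Rightarrow> 'a \<Rightarrow> 'y" where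
  "sample_mean Y n \<omega> = (1 / real n) *\<^sub>R (\<Sum>i=1..n. Y i \<omega>)"

definition sample_var :: "(nat \<Rightarrow> 'a \<Rightarrow> 'y::real_inner) \<Rightarrow> (nat \<Rightarrow> 'y) \<Rightarrow> nat \<Rightarrow> nat \<Rightarrow> 'a \<Rightarrow> real" where
  "sample_var Y u n j \<omega> = (1 / (real n - 1)) * (\<Sum>i=1..n. ((Y i \<omega> - sample_mean Y n \<omega>) \<bullet> u j)\<^sup>2)"

definition sample_total :: "real \<Rightarrow> (nat \<Rightarrow> 'a \<Rightarrow> 'y::real_inner) \<Rightarrow> (nat \<Rightarrow> 'y) \<Rightarrow> nat \<Rightarrow> 'a \<Rightarrow> real" where
  "sample_total \<epsilon>1 Y u n \<omega> = (\<Sum>j=1..mcut \<epsilon>1 n. sample_var Y u n j \<omega>)"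

definition rand_weight :: "(nat \<Rightarrow> real) \<Rightarrow> real \<Rightarrow> real \<Rightarrow> (nat \<Rightarrow> 'a \<Rightarrow> 'y::real_inner) \<Rightarrow> (nat \<Rightarrow> 'y) \<Rightarrow> nat \<Rightarrow> nat \<Rightarrow> 'a \<Rightarrow> real" where
  "rand_weight \<sigma> \<epsilon>1 \<epsilon>2 Y u n j \<omega> =
     weight \<sigma> \<epsilon>2 (sample_total \<epsilon>1 Y u n \<omega>) (\<lambda>j'. sample_var Y u n j' \<omega>) j"

definition delta' :: "(nat \<Rightarrow> real) \<Rightarrow> real \<Rightarrow> real \<Rightarrow> (nat \<Rightarrow> 'a \<Rightarrow> 'y::real_inner) \<Rightarrow> (nat \<Rightarrow> 'y) \<Rightarrow> nat \<Rightarrow> 'a \<Rightarrow> real" where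
  "delta' \<sigma> \<epsilon>1 \<epsilon>2 Y u n \<omega> =
     sqrt ((1 / real n) * (\<Sum>j=1..mcut \<epsilon>1 n. (rand_weight \<sigma> \<epsilon>1 \<epsilon>2 Y u n j \<omega>)\<^sup>2 * sample_var Y u n j \<omega>))"

end

theory Submission
  imports Defs "HOL-Real_Asymp.Real_Asymp"
begin


lemma coeff_sum:
  fixes u :: "nat \<Rightarrow> 'y::real_inner"
  assumes orth: "\<And>i j. i \<ge> 1 \<Longrightarrow> j \<ge> 1 \<Longrightarrow> u i \<bullet> u j = (if i = j then 1 else 0)"
    and k: "k \<in> {1..N}"
  shows "(\<Sum>j=1..N. c j *\<^sub>R u j) \<bullet> u k = c k"
proof -
  have "(\<Sum>j=1..N. c j *\<^sub>R u j) \<bullet> u k = (\<Sum>j=1..N. c j * (u j \<bullet> u k))"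
    by (simp add: inner_sum_left)
  also have "\<dots> = (\<Sum>j=1..N. if j = k then c k else 0)"
    by (rule sum.cong) (use k in \<open>auto simp: orth\<close>)
  also have "\<dots> = c k" using k by simp
  finally show ?thesis .
qed

lemma proj_norm:
  fixes u :: "nat \<Rightarrow> 'y::real_inner"
  assumes orth: "\<And>i j. i \<ge> 1 \<Longrightarrow> j \<ge> 1 \<Longrightarrow> u i \<bullet> u j = (if i = j then 1 else 0)"
  shows "(norm (y - (\<Sum>j=1..N. (y \<bullet> u j) *\<^sub>R u j)))\<^sup>2 = (norm y)\<^sup>2 - (\<Sum>j=1..N. (y \<bullet> u j)\<^sup>2)"
proof -
  define P where "P = (\<Sum>j=1..N. (y \<bullet> u j) *\<^sub>R u j)"
  have yP: "y \<bullet> P = (\<Sum>j=1..N. (y \<bullet> u j)\<^sup>2)"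
    by (simp add: P_def inner_sum_right power2_eq_square)
  have PP: "P \<bullet> P = (\<Sum>j=1..N. (y \<bullet> u j)\<^sup>2)"
  proof -
    have "P \<bullet> P = (\<Sum>k=1..N. ((y \<bullet> u k) *\<^sub>R u k) \<bullet> P)"
      by (subst (1) P_def) (simp only: inner_sum_left)
    also have "\<dots> = (\<Sum>k=1..N. (y \<bullet> u k) * (P \<bullet> u k))"
      by (simp add: inner_commute)
    also have "\<dots> = (\<Sum>k=1..N. (y \<bullet> u k)\<^sup>2)"
      by (rule sum.cong[OF refl], unfold P_def, subst coeff_sum[OF orth], simp_all add: power2_eq_square)
    finally show ?thesis .
  qed
  have "(norm (y - P))\<^sup>2 = y \<bullet> y - 2 * (y \<bullet> P) + P \<bullet> P"
    by (simp add: power2_norm_eq_inner inner_diff_left inner_diff_right inner_commute)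
  also have "\<dots> = (norm y)\<^sup>2 - (\<Sum>j=1..N. (y \<bullet> u j)\<^sup>2)"
    by (simp add: yP PP power2_norm_eq_inner)
  finally show ?thesis by (simp add: P_def)
qed

lemma proj_lin:
  fixes u :: "nat \<Rightarrow> 'y::real_inner"
  shows "(a - b) - (\<Sum>j=1..N. ((a - b) \<bullet> u j) *\<^sub>R u j)
    = (a - (\<Sum>j=1..N. (a \<bullet> u j) *\<^sub>R u j)) - (b - (\<Sum>j=1..N. (b \<bullet> u j) *\<^sub>R u j))"
  by (simp add: inner_diff_left scaleR_left_diff_distrib sum_subtractf algebra_simps)

lemma proj_span:
  fixes u :: "nat \<Rightarrow> 'y::real_inner"
  assumes orth: "\<And>i j. i \<ge> 1 \<Longrightarrow> j \<ge> 1 \<Longrightarrow> u i \<bullet> u j = (if i = j then 1 else 0)"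
  shows "(\<Sum>j=1..N. ((\<Sum>k=1..N. c k *\<^sub>R u k) \<bullet> u j) *\<^sub>R u j) = (\<Sum>k=1..N. c k *\<^sub>R u k)"
  by (rule sum.cong[OF refl], subst coeff_sum[OF orth], simp_all)

lemma proj_le:
  fixes u :: "nat \<Rightarrow> 'y::real_inner"
  assumes orth: "\<And>i j. i \<ge> 1 \<Longrightarrow> j \<ge> 1 \<Longrightarrow> u i \<bullet> u j = (if i = j then 1 else 0)"
  shows "norm (y - (\<Sum>j=1..N. (y \<bullet> u j) *\<^sub>R u j)) \<le> norm (y - (\<Sum>k=1..N. c k *\<^sub>R u k))"
proof -
  let ?S = "\<Sum>k=1..N. c k *\<^sub>R u k"
  have "y - (\<Sum>j=1..N. (y \<bullet> u j) *\<^sub>R u j) = (y - ?S) - (\<Sum>j=1..N. ((y - ?S) \<bullet> u j) *\<^sub>R u j)"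
  proof -
    have e2: "(\<Sum>j=1..N. (?S \<bullet> u j) *\<^sub>R u j) = ?S" by (rule proj_span[OF orth])
    show ?thesis unfolding proj_lin[of y ?S] e2 by simp
  qed
  moreover have "(norm ((y - ?S) - (\<Sum>j=1..N. ((y - ?S) \<bullet> u j) *\<^sub>R u j)))\<^sup>2 \<le> (norm (y - ?S))\<^sup>2"
  proof -
    have "0 \<le> (\<Sum>j=1..N. ((y - ?S) \<bullet> u j)\<^sup>2)" by (rule sum_nonneg) simp
    thus ?thesis using proj_norm[OF orth, of "y - ?S" N] by linarith
  qed
  ultimately show ?thesis by (metis norm_ge_zero power2_le_imp_le)
qed

lemma parseval:
  fixes u :: "nat \<Rightarrow> 'y::real_inner"
  assumes orth: "\<And>i j. i \<ge> 1 \<Longrightarrow> j \<ge> 1 \<Longrightarrow> u i \<bullet> u j = (if i = j then 1 else 0)"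
    and approx: "\<And>\<epsilon>. \<epsilon> > 0 \<Longrightarrow> \<exists>c N. norm (y - (\<Sum>k=1..N. c k *\<^sub>R u k)) < \<epsilon>"
  shows "(\<lambda>N. \<Sum>j=1..N. (y \<bullet> u j)\<^sup>2) \<longlonglongrightarrow> (norm y)\<^sup>2"
proof (rule LIMSEQ_I)
  fix r :: real assume r: "r > 0"
  obtain c N where cN: "norm (y - (\<Sum>k=1..N. c k *\<^sub>R u k)) < sqrt r"
    using approx[of "sqrt r"] r by auto
  have lt: "norm (y - (\<Sum>j=1..N. (y \<bullet> u j) *\<^sub>R u j)) < sqrt r"
    using proj_le[OF orth, of y N c] cN by linarith
  hence "(norm (y - (\<Sum>j=1..N. (y \<bullet> u j) *\<^sub>R u j)))\<^sup>2 < r"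
  proof -
    have "(norm (y - (\<Sum>j=1..N. (y \<bullet> u j) *\<^sub>R u j)))\<^sup>2 < (sqrt r)\<^sup>2"
      by (rule power_strict_mono) (use lt in auto)
    thus ?thesis using r by simp
  qed
  hence N: "(norm y)\<^sup>2 - (\<Sum>j=1..N. (y \<bullet> u j)\<^sup>2) < r" using proj_norm[OF orth, of y N] by linarith
  show "\<exists>no. \<forall>n\<ge>no. norm ((\<Sum>j=1..n. (y \<bullet> u j)\<^sup>2) - (norm y)\<^sup>2) < r"
  proof (intro exI allI impI)
    fix n assume n: "n \<ge> N"
    have le: "(\<Sum>j=1..n. (y \<bullet> u j)\<^sup>2) \<le> (norm y)\<^sup>2"
      using proj_norm[OF orth, of y n] by (metis diff_ge_0_iff_ge zero_le_power2)
    have "(\<Sum>j=1..N. (y \<bullet> u j)\<^sup>2) \<le> (\<Sum>j=1..n. (y \<bullet> u j)\<^sup>2)"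
      by (rule sum_mono2) (use n in auto)
    with le N show "norm ((\<Sum>j=1..n. (y \<bullet> u j)\<^sup>2) - (norm y)\<^sup>2) < r" by simp
  qed
qed


lemma sq_sum_ind:
  fixes x :: "nat \<Rightarrow> real"
  shows "(\<Sum>i=1..n. x i)\<^sup>2 = (\<Sum>i=1..n. (x i)\<^sup>2) + 2 * (\<Sum>i=1..n. x i * (\<Sum>k=1..<i. x k))"
proof (induction n)
  case 0 then show ?case by simp
next
  case (Suc n)
  have e: "(\<Sum>k=1..<Suc n. x k) = (\<Sum>k=1..n. x k)"
    by (rule sum.cong) auto
  show ?case using Suc.IH by (simp only: sum.cl_ivl_Suc e) (simp add: power2_eq_square algebra_simps)
qed

lemma svar_identity:
  fixes x :: "nat \<Rightarrow> real"
  assumes n: "n \<ge> 2"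
  shows "(1/(real n - 1)) * (\<Sum>i=1..n. (x i - (1/real n) * (\<Sum>k=1..n. x k))\<^sup>2)
       = (1/real n) * (\<Sum>i=1..n. (x i)\<^sup>2) - (2/(real n * (real n - 1))) * (\<Sum>i=1..n. x i * (\<Sum>k=1..<i. x k))"
proof -
  define T where "T = (\<Sum>k=1..n. x k)"
  define Q where "Q = (\<Sum>i=1..n. (x i)\<^sup>2)"
  define D where "D = (\<Sum>i=1..n. x i * (\<Sum>k=1..<i. x k))"
  have nn: "real n \<ge> 2" using n by simp
  define m where "m = (1/real n) * T"
  have "(\<Sum>i=1..n. (x i - m)\<^sup>2) = (\<Sum>i=1..n. ((x i)\<^sup>2 - 2*m*x i) + m\<^sup>2)"
    by (rule sum.cong) (auto simp: power2_diff algebra_simps)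
  also have "\<dots> = Q - 2 * m * T + real n * m\<^sup>2"
    by (simp add: sum.distrib sum_subtractf sum_distrib_left[symmetric] Q_def T_def)
  finally have "(\<Sum>i=1..n. (x i - (1/real n) * T)\<^sup>2) = Q - 2 * (1/real n) * T * T + real n * ((1/real n) * T)\<^sup>2"
    by (simp add: m_def)
  also have "\<dots> = Q - T\<^sup>2 / real n" using nn by (simp add: field_simps power2_eq_square)
  also have "T\<^sup>2 = Q + 2 * D" unfolding T_def Q_def D_def by (rule sq_sum_ind)
  finally have E: "(\<Sum>i=1..n. (x i - (1/real n) * T)\<^sup>2) = Q - (Q + 2 * D) / real n" .
  show ?thesis unfolding T_def[symmetric] Q_def[symmetric] D_def[symmetric] E
    using nn by (simp add: field_simps)
qed

lemma gauss_real: "(\<Sum>i=1..n. real (i - 1)) = real n * (real n - 1) / 2"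
proof (induction n)
  case 0 then show ?case by simp
next
  case (Suc n) then show ?case by (cases n) (simp_all add: field_simps)
qed

context prob_space begin

lemma L0:
  fixes X :: "nat \<Rightarrow> 'a \<Rightarrow> real" and f :: "real \<Rightarrow> real" and g :: "(nat \<Rightarrow> real) \<Rightarrow> real" and G :: "'a \<Rightarrow> real"
  assumes ind: "indep_vars (\<lambda>_. borel) X I" and a: "a \<in> I" and S: "S \<subseteq> I" "a \<notin> S"
    and f: "f \<in> borel_measurable borel"
    and g: "g \<in> borel_measurable (PiM S (\<lambda>_. borel))"
    and G: "\<And>\<omega>. \<omega> \<in> space M \<Longrightarrow> G \<omega> = g (restrict (\<lambda>i. X i \<omega>) S)"
    and intf: "integrable M (\<lambda>\<omega>. f (X a \<omega>))" and intG: "integrable M G"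
  shows "expectation (\<lambda>\<omega>. f (X a \<omega>) * G \<omega>) = expectation (\<lambda>\<omega>. f (X a \<omega>)) * expectation G"
proof -
  have "indep_var (PiM {a} (\<lambda>_. borel)) (\<lambda>\<omega>. restrict (\<lambda>i. X i \<omega>) {a})
          (PiM S (\<lambda>_. borel)) (\<lambda>\<omega>. restrict (\<lambda>i. X i \<omega>) S)"
    by (rule indep_var_restrict[OF ind]) (use a S in auto)
  hence iv: "indep_var borel ((\<lambda>h. f (h a)) \<circ> (\<lambda>\<omega>. restrict (\<lambda>i. X i \<omega>) {a}))
             borel (g \<circ> (\<lambda>\<omega>. restrict (\<lambda>i. X i \<omega>) S))"
  proof (rule indep_var_compose)
    show "(\<lambda>h. f (h a)) \<in> borel_measurable (PiM {a} (\<lambda>_. borel))"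
      using f by measurable
  qed (use g in auto)
  have e1: "((\<lambda>h. f (h a)) \<circ> (\<lambda>\<omega>. restrict (\<lambda>i. X i \<omega>) {a})) = (\<lambda>\<omega>. f (X a \<omega>))" by auto
  have intG': "integrable M (g \<circ> (\<lambda>\<omega>. restrict (\<lambda>i. X i \<omega>) S))"
  proof -
    have "integrable M G = integrable M (g \<circ> (\<lambda>\<omega>. restrict (\<lambda>i. X i \<omega>) S))"
      by (rule Bochner_Integration.integrable_cong) (auto simp: G)
    thus ?thesis using intG by simp
  qed
  have "expectation (\<lambda>\<omega>. f (X a \<omega>) * G \<omega>) = expectation (\<lambda>\<omega>. f (X a \<omega>) * (g \<circ> (\<lambda>\<omega>. restrict (\<lambda>i. X i \<omega>) S)) \<omega>)"
    by (rule Bochner_Integration.integral_cong) (auto simp: G)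
  also have "\<dots> = expectation (\<lambda>\<omega>. f (X a \<omega>)) * expectation (g \<circ> (\<lambda>\<omega>. restrict (\<lambda>i. X i \<omega>) S))"
    using iv[unfolded e1] intf intG' by (intro indep_var_lebesgue_integral) (auto simp: comp_def)
  also have "expectation (g \<circ> (\<lambda>\<omega>. restrict (\<lambda>i. X i \<omega>) S)) = expectation G"
    by (rule Bochner_Integration.integral_cong) (auto simp: G)
  finally show ?thesis .
qed

lemma sum_sq_orth:
  fixes \<xi> :: "nat \<Rightarrow> 'a \<Rightarrow> real"
  assumes fin: "finite I" and int: "\<And>i k. i\<in>I \<Longrightarrow> k\<in>I \<Longrightarrow> integrable M (\<lambda>\<omega>. \<xi> i \<omega> * \<xi> k \<omega>)"
    and orth: "\<And>i k. i\<in>I \<Longrightarrow> k\<in>I \<Longrightarrow> i\<noteq>k \<Longrightarrow> expectation (\<lambda>\<omega>. \<xi> i \<omega> * \<xi> k \<omega>) = 0"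
  shows "expectation (\<lambda>\<omega>. (\<Sum>i\<in>I. \<xi> i \<omega>)\<^sup>2) = (\<Sum>i\<in>I. expectation (\<lambda>\<omega>. (\<xi> i \<omega>)\<^sup>2))"
proof -
  have eq: "(\<lambda>\<omega>. (\<Sum>i\<in>I. \<xi> i \<omega>)\<^sup>2) = (\<lambda>\<omega>. \<Sum>i\<in>I. \<Sum>k\<in>I. \<xi> i \<omega> * \<xi> k \<omega>)"
    by (simp add: power2_eq_square sum_product)
  have "expectation (\<lambda>\<omega>. (\<Sum>i\<in>I. \<xi> i \<omega>)\<^sup>2) = (\<Sum>i\<in>I. \<Sum>k\<in>I. expectation (\<lambda>\<omega>. \<xi> i \<omega> * \<xi> k \<omega>))"
  proof -
    have "expectation (\<lambda>\<omega>. \<Sum>i\<in>I. \<Sum>k\<in>I. \<xi> i \<omega> * \<xi> k \<omega>) = (\<Sum>i\<in>I. expectation (\<lambda>\<omega>. \<Sum>k\<in>I. \<xi> i \<omega> * \<xi> k \<omega>))"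
      by (rule Bochner_Integration.integral_sum) (auto intro!: integrable_sum int)
    also have "\<dots> = (\<Sum>i\<in>I. \<Sum>k\<in>I. expectation (\<lambda>\<omega>. \<xi> i \<omega> * \<xi> k \<omega>))"
      by (rule sum.cong[OF refl], rule Bochner_Integration.integral_sum) (auto intro!: int)
    finally show ?thesis unfolding eq .
  qed
  also have "\<dots> = (\<Sum>i\<in>I. \<Sum>k\<in>I. if k = i then expectation (\<lambda>\<omega>. (\<xi> i \<omega>)\<^sup>2) else 0)"
    by (intro sum.cong refl) (auto simp: orth power2_eq_square)
  also have "\<dots> = (\<Sum>i\<in>I. expectation (\<lambda>\<omega>. (\<xi> i \<omega>)\<^sup>2))"
    using fin by simp
  finally show ?thesis .
qed

end


lemma abs_le_1_4: "\<bar>x::real\<bar> \<le> 1 + x^4"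
proof -
  have "x^4 = (x\<^sup>2)\<^sup>2" by simp
  have "2 * \<bar>x\<bar> \<le> 1 + x\<^sup>2"
  proof -
    have "(\<bar>x\<bar> - 1)\<^sup>2 = x\<^sup>2 - 2*\<bar>x\<bar> + 1" by (simp add: power2_eq_square algebra_simps abs_mult_self_eq)
    moreover have "0 \<le> (\<bar>x\<bar> - 1)\<^sup>2" by simp
    ultimately show ?thesis by linarith
  qed
  moreover have "x\<^sup>2 \<le> 1 + x^4"
  proof -
    have "(x\<^sup>2 - 1)\<^sup>2 = x^4 - 2*x\<^sup>2 + 1" by (simp add: power2_eq_square power4_eq_xxxx algebra_simps)
    moreover have "0 \<le> (x\<^sup>2 - 1)\<^sup>2" "0 \<le> x\<^sup>2" by simp_all
    ultimately show ?thesis by linarith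
  qed
  moreover have "0 \<le> x^4" by simp
  ultimately show ?thesis by linarith
qed

lemma sq_le_1_4: "(x::real)\<^sup>2 \<le> 1 + x^4"
proof -
  have "(x\<^sup>2 - 1)\<^sup>2 = x^4 - 2*x\<^sup>2 + 1" by (simp add: power2_eq_square power4_eq_xxxx algebra_simps)
  moreover have "0 \<le> (x\<^sup>2 - 1)\<^sup>2" "0 \<le> x\<^sup>2" by simp_all
  ultimately show ?thesis by linarith
qed

lemma abs_le_1_sq: "\<bar>x::real\<bar> \<le> 1 + x\<^sup>2"
  using zero_le_power2[of "\<bar>x\<bar> - 1"] by (auto simp: power2_eq_square algebra_simps abs_mult_self_eq)

lemma sum_abs_bound:
  fixes F :: "nat \<Rightarrow> real"
  assumes "\<And>i. i \<in> I \<Longrightarrow> \<bar>F i\<bar> \<le> c"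
  shows "\<bar>\<Sum>i\<in>I. F i\<bar> \<le> real (card I) * c"
proof -
  have "\<bar>\<Sum>i\<in>I. F i\<bar> \<le> (\<Sum>i\<in>I. \<bar>F i\<bar>)" by (rule sum_abs)
  also have "\<dots> \<le> real (card I) * c" by (rule sum_bounded_above) (use assms in auto)
  finally show ?thesis .
qed


context prob_space begin

lemma var_bound:
  fixes X :: "nat \<Rightarrow> 'a \<Rightarrow> real" and n :: nat
  assumes ind: "indep_vars (\<lambda>_. borel) X {1..}"
    and rv[measurable]: "\<And>i. X i \<in> borel_measurable M"
    and ident: "\<And>i. i \<ge> 1 \<Longrightarrow> distr M borel (X i) = distr M borel (X 1)"
    and int4: "integrable M (\<lambda>\<omega>. (X 1 \<omega>)^4)"
    and mean0: "expectation (X 1) = 0"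
    and n: "n \<ge> 2"
  shows "integrable M (\<lambda>\<omega>. ((1/(real n - 1)) * (\<Sum>i=1..n. (X i \<omega> - (1/real n) * (\<Sum>k=1..n. X k \<omega>))\<^sup>2)
                  - expectation (\<lambda>\<omega>. (X 1 \<omega>)\<^sup>2))\<^sup>2)
       \<and> expectation (\<lambda>\<omega>. ((1/(real n - 1)) * (\<Sum>i=1..n. (X i \<omega> - (1/real n) * (\<Sum>k=1..n. X k \<omega>))\<^sup>2)
                  - expectation (\<lambda>\<omega>. (X 1 \<omega>)\<^sup>2))\<^sup>2)
         \<le> 2 * (expectation (\<lambda>\<omega>. (X 1 \<omega>)^4) - (expectation (\<lambda>\<omega>. (X 1 \<omega>)\<^sup>2))\<^sup>2) / real n
           + 4 * (expectation (\<lambda>\<omega>. (X 1 \<omega>)\<^sup>2))\<^sup>2 / (real n * (real n - 1))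
       \<and> (expectation (\<lambda>\<omega>. (X 1 \<omega>)\<^sup>2))\<^sup>2 \<le> expectation (\<lambda>\<omega>. (X 1 \<omega>)^4)"
proof -
  define v where "v = expectation (\<lambda>\<omega>. (X 1 \<omega>)\<^sup>2)"
  define \<mu> where "\<mu> = expectation (\<lambda>\<omega>. (X 1 \<omega>)^4)"
  have tr_int: "integrable M (\<lambda>\<omega>. f (X i \<omega>)) = integrable M (\<lambda>\<omega>. f (X 1 \<omega>))"
    if i: "i \<ge> 1" and f: "f \<in> borel_measurable borel" for i and f :: "real \<Rightarrow> real"
  proof -
    have "integrable M (\<lambda>\<omega>. f (X i \<omega>)) = integrable (distr M borel (X i)) f"
      by (rule integrable_distr_eq[symmetric]) (use f in auto)
    also have "\<dots> = integrable (distr M borel (X 1)) f" using ident[OF i] by simp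
    also have "\<dots> = integrable M (\<lambda>\<omega>. f (X 1 \<omega>))"
      by (rule integrable_distr_eq) (use f in auto)
    finally show ?thesis .
  qed
  have tr_E: "expectation (\<lambda>\<omega>. f (X i \<omega>)) = expectation (\<lambda>\<omega>. f (X 1 \<omega>))"
    if i: "i \<ge> 1" and f: "f \<in> borel_measurable borel" for i and f :: "real \<Rightarrow> real"
  proof -
    have "expectation (\<lambda>\<omega>. f (X i \<omega>)) = integral\<^sup>L (distr M borel (X i)) f"
      by (rule integral_distr[symmetric]) (use f in auto)
    also have "\<dots> = integral\<^sup>L (distr M borel (X 1)) f" using ident[OF i] by simp
    also have "\<dots> = expectation (\<lambda>\<omega>. f (X 1 \<omega>))"
      by (rule integral_distr) (use f in auto)
    finally show ?thesis .
  qed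
  have int1_1: "integrable M (X 1)"
    by (rule Bochner_Integration.integrable_bound[of _ "\<lambda>\<omega>. 1 + (X 1 \<omega>)^4"])
       (use int4 abs_le_1_4 in auto)
  have int2_1: "integrable M (\<lambda>\<omega>. (X 1 \<omega>)\<^sup>2)"
    by (rule Bochner_Integration.integrable_bound[of _ "\<lambda>\<omega>. 1 + (X 1 \<omega>)^4"])
       (use int4 sq_le_1_4 in auto)
  have int1: "integrable M (X i)" if "i \<ge> 1" for i
    using tr_int[OF that, of "\<lambda>x. x"] int1_1 by simp
  have int2: "integrable M (\<lambda>\<omega>. (X i \<omega>)\<^sup>2)" if "i \<ge> 1" for i
    using tr_int[OF that, of "\<lambda>x. x\<^sup>2"] int2_1 by simp
  have int4i: "integrable M (\<lambda>\<omega>. (X i \<omega>)^4)" if "i \<ge> 1" for i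
    using tr_int[OF that, of "\<lambda>x. x^4"] int4 by simp
  have E1: "expectation (X i) = 0" if "i \<ge> 1" for i
    using tr_E[OF that, of "\<lambda>x. x"] mean0 by simp
  have E2: "expectation (\<lambda>\<omega>. (X i \<omega>)\<^sup>2) = v" if "i \<ge> 1" for i
    using tr_E[OF that, of "\<lambda>x. x\<^sup>2"] by (simp add: v_def)
  have E4: "expectation (\<lambda>\<omega>. (X i \<omega>)^4) = \<mu>" if "i \<ge> 1" for i
    using tr_E[OF that, of "\<lambda>x. x^4"] by (simp add: \<mu>_def)

  define Q where "Q \<omega> = 1 + (\<Sum>i=1..n. (X i \<omega>)\<^sup>2)" for \<omega>
  have Q_meas[measurable]: "Q \<in> borel_measurable M" unfolding Q_def by measurable
  have Q1: "1 \<le> Q \<omega>" for \<omega> unfolding Q_def by (simp add: sum_nonneg)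
  have intQ2: "integrable M (\<lambda>\<omega>. (Q \<omega>)\<^sup>2)"
  proof -
    have eq: "(\<lambda>\<omega>. (Q \<omega>)\<^sup>2) = (\<lambda>\<omega>. 1 + 2 * (\<Sum>i=1..n. (X i \<omega>)\<^sup>2) + (\<Sum>i=1..n. \<Sum>k=1..n. (X i \<omega>)\<^sup>2 * (X k \<omega>)\<^sup>2))"
      by (simp add: Q_def power2_eq_square[of "1 + _"] sum_product algebra_simps)
    have ik: "integrable M (\<lambda>\<omega>. (X i \<omega>)\<^sup>2 * (X k \<omega>)\<^sup>2)" if "i \<in> {1..n}" "k \<in> {1..n}" for i k
    proof (rule Bochner_Integration.integrable_bound[of _ "\<lambda>\<omega>. (X i \<omega>)^4 + (X k \<omega>)^4"])
      show "integrable M (\<lambda>\<omega>. (X i \<omega>)^4 + (X k \<omega>)^4)" using that int4i by auto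
      show "AE \<omega> in M. norm ((X i \<omega>)\<^sup>2 * (X k \<omega>)\<^sup>2) \<le> norm ((X i \<omega>)^4 + (X k \<omega>)^4)"
      proof (intro AE_I2)
        fix \<omega>
        have "0 \<le> ((X i \<omega>)\<^sup>2 - (X k \<omega>)\<^sup>2)\<^sup>2" by simp
        moreover have "((X i \<omega>)\<^sup>2 - (X k \<omega>)\<^sup>2)\<^sup>2 = (X i \<omega>)^4 + (X k \<omega>)^4 - 2 * ((X i \<omega>)\<^sup>2 * (X k \<omega>)\<^sup>2)"
          by (simp add: power2_eq_square power4_eq_xxxx algebra_simps)
        moreover have "0 \<le> (X i \<omega>)\<^sup>2 * (X k \<omega>)\<^sup>2" by simp
        ultimately have "(X i \<omega>)\<^sup>2 * (X k \<omega>)\<^sup>2 \<le> (X i \<omega>)^4 + (X k \<omega>)^4" by linarith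
        thus "norm ((X i \<omega>)\<^sup>2 * (X k \<omega>)\<^sup>2) \<le> norm ((X i \<omega>)^4 + (X k \<omega>)^4)"
          by simp
      qed
    qed simp
    show ?thesis unfolding eq
      by (intro Bochner_Integration.integrable_add integrable_mult_right Bochner_Integration.integrable_sum integrable_const int2 ik) auto
  qed
  have prodQ: "integrable M (\<lambda>\<omega>. F \<omega> * G \<omega>)"
    if [measurable]: "F \<in> borel_measurable M" "G \<in> borel_measurable M" and cd: "c \<ge> 0" "d \<ge> 0"
      and bF: "\<And>\<omega>. \<bar>F \<omega>\<bar> \<le> c * Q \<omega>" and bG: "\<And>\<omega>. \<bar>G \<omega>\<bar> \<le> d * Q \<omega>" for F G and c d :: real
  proof (rule Bochner_Integration.integrable_bound[of _ "\<lambda>\<omega>. c * d * (Q \<omega>)\<^sup>2"])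
    show "integrable M (\<lambda>\<omega>. c * d * (Q \<omega>)\<^sup>2)" using intQ2 by simp
    show "AE \<omega> in M. norm (F \<omega> * G \<omega>) \<le> norm (c * d * (Q \<omega>)\<^sup>2)"
    proof (intro AE_I2)
      fix \<omega>
      have "\<bar>F \<omega>\<bar> * \<bar>G \<omega>\<bar> \<le> (c * Q \<omega>) * (d * Q \<omega>)"
        by (rule mult_mono) (use bF bG cd Q1[of \<omega>] in auto)
      thus "norm (F \<omega> * G \<omega>) \<le> norm (c * d * (Q \<omega>)\<^sup>2)"
        using cd Q1[of \<omega>] by (simp add: abs_mult power2_eq_square algebra_simps)
    qed
  qed simp
  have Xmeas: "(\<lambda>h. h l) \<in> borel_measurable (PiM S (\<lambda>_. borel))" if "l \<in> S" for l and S :: "nat set"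
    using measurable_component_singleton[OF that, of "\<lambda>_. borel"] by simp
  have sum_meas: "(\<lambda>h::nat\<Rightarrow>real. sum h T) \<in> borel_measurable (PiM S (\<lambda>_. borel))" if "T \<subseteq> S" for T S :: "nat set"
    by (rule borel_measurable_sum[where f="\<lambda>l h. h l", simplified]) (use Xmeas that in blast)
  have sqle': "(X i \<omega>)\<^sup>2 \<le> (\<Sum>k=1..n. (X k \<omega>)\<^sup>2)" if "i \<in> {1..n}" for i \<omega>
    by (rule member_le_sum) (use that in auto)
  have sqle: "(X i \<omega>)\<^sup>2 \<le> Q \<omega>" if "i \<in> {1..n}" for i \<omega>
    using sqle'[OF that, of \<omega>] unfolding Q_def by simp
  have bX: "\<bar>X i \<omega>\<bar> \<le> 1 * Q \<omega>" if "i \<in> {1..n}" for i \<omega>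
    using abs_le_1_sq[of "X i \<omega>"] sqle'[OF that, of \<omega>] unfolding Q_def by simp
  define Z where "Z i \<omega> = (X i \<omega>)\<^sup>2 - v" for i \<omega>
  define W where "W i \<omega> = (\<Sum>k\<in>{1..<i}. X k \<omega>)" for i \<omega>
  define D where "D i \<omega> = X i \<omega> * W i \<omega>" for i \<omega>
  have Zm[measurable]: "Z i \<in> borel_measurable M" for i unfolding Z_def by measurable
  have Wm[measurable]: "W i \<in> borel_measurable M" for i unfolding W_def by measurable
  have Dm[measurable]: "D i \<in> borel_measurable M" for i unfolding D_def by measurable
  have bZ: "\<bar>Z i \<omega>\<bar> \<le> (1 + \<bar>v\<bar>) * Q \<omega>" if "i \<in> {1..n}" for i \<omega>
  proof -
    have "\<bar>Z i \<omega>\<bar> \<le> (X i \<omega>)\<^sup>2 + \<bar>v\<bar>" unfolding Z_def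
      using abs_triangle_ineq4[of "(X i \<omega>)\<^sup>2" v] by simp
    also have "\<dots> \<le> Q \<omega> + \<bar>v\<bar> * Q \<omega>"
      using sqle[OF that, of \<omega>] Q1[of \<omega>] mult_left_mono[of 1 "Q \<omega>" "\<bar>v\<bar>"] by simp
    finally show ?thesis by (simp add: algebra_simps)
  qed
  have bW: "\<bar>W i \<omega>\<bar> \<le> real n * Q \<omega>" if "i \<in> {1..n}" for i \<omega>
  proof -
    have "\<bar>W i \<omega>\<bar> \<le> real (card {1..<i}) * Q \<omega>"
      unfolding W_def by (rule sum_abs_bound) (use bX that in auto)
    also have "\<dots> \<le> real n * Q \<omega>"
      by (rule mult_right_mono) (use that Q1[of \<omega>] in auto)
    finally show ?thesis .
  qed
  have bD: "\<bar>D i \<omega>\<bar> \<le> real n * Q \<omega>" if "i \<in> {1..n}" for i \<omega>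
  proof -
    have "D i \<omega> = (\<Sum>k\<in>{1..<i}. X i \<omega> * X k \<omega>)" unfolding D_def W_def by (simp add: sum_distrib_left)
    also have "\<bar>\<dots>\<bar> \<le> real (card {1..<i}) * Q \<omega>"
    proof (rule sum_abs_bound)
      fix k assume k: "k \<in> {1..<i}"
      have k': "k \<in> {1..n}" using k that by auto
      have "2 * \<bar>X i \<omega> * X k \<omega>\<bar> \<le> (X i \<omega>)\<^sup>2 + (X k \<omega>)\<^sup>2"
      proof -
        have "0 \<le> (\<bar>X i \<omega>\<bar> - \<bar>X k \<omega>\<bar>)\<^sup>2" by simp
        moreover have "(\<bar>X i \<omega>\<bar> - \<bar>X k \<omega>\<bar>)\<^sup>2 = (X i \<omega>)\<^sup>2 + (X k \<omega>)\<^sup>2 - 2 * \<bar>X i \<omega> * X k \<omega>\<bar>"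
          by (simp add: power2_eq_square algebra_simps abs_mult abs_mult_self_eq)
        ultimately show ?thesis by linarith
      qed
      thus "\<bar>X i \<omega> * X k \<omega>\<bar> \<le> Q \<omega>" using sqle[OF that, of \<omega>] sqle[OF k', of \<omega>] by linarith
    qed
    also have "\<dots> \<le> real n * Q \<omega>"
      by (rule mult_right_mono) (use that Q1[of \<omega>] in auto)
    finally show ?thesis .
  qed
  have Qn: "0 \<le> real n" by simp
  have intX: "integrable M (\<lambda>\<omega>. X i \<omega> * X k \<omega>)" if "i \<in> {1..n}" "k \<in> {1..n}" for i k
    by (rule prodQ[of _ _ 1 1]) (use bX that in auto)
  have EXX: "expectation (\<lambda>\<omega>. X i \<omega> * X k \<omega>) = 0" if "i \<in> {1..n}" "k \<in> {1..n}" "i \<noteq> k" for i k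
  proof -
    have "expectation (\<lambda>\<omega>. X i \<omega> * X k \<omega>) = expectation (\<lambda>\<omega>. X i \<omega>) * expectation (X k)"
      by (rule L0[OF ind, where a=i and S="{k}" and f="\<lambda>x. x" and g="\<lambda>h. h k" and G="X k", simplified])
         (use that in \<open>auto intro: Xmeas int1\<close>)
    thus ?thesis using E1[of i] that by simp
  qed
  have intW2: "integrable M (\<lambda>\<omega>. W i \<omega> * W k \<omega>)" if "i \<in> {1..n}" "k \<in> {1..n}" for i k
    by (rule prodQ[of _ _ "real n" "real n"]) (use bW that in auto)
  have EW2: "expectation (\<lambda>\<omega>. (W i \<omega>)\<^sup>2) = real (i - 1) * v" if "i \<in> {1..n}" for i
  proof -
    have "expectation (\<lambda>\<omega>. (W i \<omega>)\<^sup>2) = (\<Sum>k\<in>{1..<i}. expectation (\<lambda>\<omega>. (X k \<omega>)\<^sup>2))"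
      unfolding W_def by (rule sum_sq_orth) (use that in \<open>auto intro!: intX EXX\<close>)
    also have "\<dots> = (\<Sum>k\<in>{1..<i}. v)" by (rule sum.cong) (auto simp: E2)
    finally show ?thesis by simp
  qed
  have intZ: "integrable M (Z i)" if "i \<ge> 1" for i
    unfolding Z_def using int2[OF that] by auto
  have EZ: "expectation (Z i) = 0" if "i \<ge> 1" for i
    unfolding Z_def using int2[OF that] E2[OF that] by (simp add: prob_space)
  have intZZ: "integrable M (\<lambda>\<omega>. Z i \<omega> * Z k \<omega>)" if "i \<in> {1..n}" "k \<in> {1..n}" for i k
    by (rule prodQ[of _ _ "1 + \<bar>v\<bar>" "1 + \<bar>v\<bar>"]) (use bZ that in auto)
  have EZZ: "expectation (\<lambda>\<omega>. Z i \<omega> * Z k \<omega>) = 0" if "i \<in> {1..n}" "k \<in> {1..n}" "i \<noteq> k" for i k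
  proof -
    have "expectation (\<lambda>\<omega>. ((\<lambda>x. x\<^sup>2 - v) (X i \<omega>)) * Z k \<omega>) = expectation (\<lambda>\<omega>. (\<lambda>x. x\<^sup>2 - v) (X i \<omega>)) * expectation (Z k)"
      by (rule L0[OF ind, where a=i and S="{k}" and g="\<lambda>h. (h k)\<^sup>2 - v"])
         (use that intZ[of i, unfolded Z_def] intZ[of k, unfolded Z_def] in \<open>auto intro: Xmeas simp: Z_def\<close>)
    thus ?thesis using EZ[of k] that by (simp add: Z_def)
  qed
  have EZ2: "expectation (\<lambda>\<omega>. (Z i \<omega>)\<^sup>2) = \<mu> - v\<^sup>2" if "i \<ge> 1" for i
  proof -
    have "(\<lambda>\<omega>. (Z i \<omega>)\<^sup>2) = (\<lambda>\<omega>. (X i \<omega>)^4 - 2 * v * (X i \<omega>)\<^sup>2 + v\<^sup>2)"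
      by (auto simp: Z_def power2_eq_square power4_eq_xxxx algebra_simps)
    hence "expectation (\<lambda>\<omega>. (Z i \<omega>)\<^sup>2) = expectation (\<lambda>\<omega>. (X i \<omega>)^4) - 2 * v * expectation (\<lambda>\<omega>. (X i \<omega>)\<^sup>2) + v\<^sup>2"
      using int4i[OF that] int2[OF that] by (simp add: prob_space)
    thus ?thesis using E4[OF that] E2[OF that] by (simp add: power2_eq_square)
  qed
  have intDD: "integrable M (\<lambda>\<omega>. D i \<omega> * D k \<omega>)" if "i \<in> {1..n}" "k \<in> {1..n}" for i k
    by (rule prodQ[of _ _ "real n" "real n"]) (use bD that in auto)
  have ED2: "expectation (\<lambda>\<omega>. (D i \<omega>)\<^sup>2) = real (i - 1) * v\<^sup>2" if "i \<in> {1..n}" for i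
  proof -
    have "expectation (\<lambda>\<omega>. (\<lambda>x. x\<^sup>2) (X i \<omega>) * (W i \<omega>)\<^sup>2) = expectation (\<lambda>\<omega>. (\<lambda>x. x\<^sup>2) (X i \<omega>)) * expectation (\<lambda>\<omega>. (W i \<omega>)\<^sup>2)"
    proof (rule L0[OF ind, where a=i and S="{1..<i}" and g="\<lambda>h. (\<Sum>l\<in>{1..<i}. h l)\<^sup>2"])
      show "(\<lambda>h::nat\<Rightarrow>real. (\<Sum>l\<in>{1..<i}. h l)\<^sup>2) \<in> borel_measurable (PiM {1..<i} (\<lambda>_. borel))"
        by (rule borel_measurable_power[OF sum_meas]) auto
      show "integrable M (\<lambda>\<omega>. (W i \<omega>)\<^sup>2)" using intW2[OF that that] by (simp add: power2_eq_square)
    qed (use that int2[of i] in \<open>auto simp: W_def\<close>)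
    moreover have "(\<lambda>\<omega>. (D i \<omega>)\<^sup>2) = (\<lambda>\<omega>. (\<lambda>x. x\<^sup>2) (X i \<omega>) * (W i \<omega>)\<^sup>2)"
      by (auto simp: D_def power_mult_distrib)
    ultimately have "expectation (\<lambda>\<omega>. (D i \<omega>)\<^sup>2) = v * (real (i - 1) * v)"
      using E2[of i] EW2[OF that] that by simp
    thus ?thesis by (simp add: power2_eq_square)
  qed
  have EDD: "expectation (\<lambda>\<omega>. D i \<omega> * D k \<omega>) = 0" if "i \<in> {1..n}" "k \<in> {1..n}" "i < k" for i k
  proof -
    have "expectation (\<lambda>\<omega>. (\<lambda>x. x) (X k \<omega>) * (D i \<omega> * W k \<omega>)) = expectation (\<lambda>\<omega>. (\<lambda>x. x) (X k \<omega>)) * expectation (\<lambda>\<omega>. D i \<omega> * W k \<omega>)"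
    proof (rule L0[OF ind, where a=k and S="{1..<k}" and g="\<lambda>h. h i * (\<Sum>l\<in>{1..<i}. h l) * (\<Sum>l\<in>{1..<k}. h l)"])
      show "(\<lambda>h::nat\<Rightarrow>real. h i * (\<Sum>l\<in>{1..<i}. h l) * (\<Sum>l\<in>{1..<k}. h l)) \<in> borel_measurable (PiM {1..<k} (\<lambda>_. borel))"
        using that by (intro borel_measurable_times sum_meas Xmeas) auto
      show "integrable M (\<lambda>\<omega>. D i \<omega> * W k \<omega>)"
        by (rule prodQ[of _ _ "real n" "real n"]) (use bD bW that in auto)
    qed (use that int1[of k] in \<open>auto simp: W_def D_def\<close>)
    moreover have "(\<lambda>\<omega>. D i \<omega> * D k \<omega>) = (\<lambda>\<omega>. (\<lambda>x. x) (X k \<omega>) * (D i \<omega> * W k \<omega>))"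
      by (auto simp: D_def)
    ultimately show ?thesis using E1[of k] that by simp
  qed
  have nr: "real n \<ge> 2" using n by simp
  have ESZ: "expectation (\<lambda>\<omega>. (\<Sum>i=1..n. Z i \<omega>)\<^sup>2) = real n * (\<mu> - v\<^sup>2)"
  proof -
    have "expectation (\<lambda>\<omega>. (\<Sum>i=1..n. Z i \<omega>)\<^sup>2) = (\<Sum>i=1..n. expectation (\<lambda>\<omega>. (Z i \<omega>)\<^sup>2))"
      by (rule sum_sq_orth) (auto intro!: intZZ EZZ)
    also have "\<dots> = (\<Sum>i=1..n. \<mu> - v\<^sup>2)" by (rule sum.cong) (auto simp: EZ2)
    finally show ?thesis by simp
  qed
  have ESD: "expectation (\<lambda>\<omega>. (\<Sum>i=1..n. D i \<omega>)\<^sup>2) = v\<^sup>2 * (real n * (real n - 1) / 2)"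
  proof -
    have "expectation (\<lambda>\<omega>. (\<Sum>i=1..n. D i \<omega>)\<^sup>2) = (\<Sum>i=1..n. expectation (\<lambda>\<omega>. (D i \<omega>)\<^sup>2))"
    proof (rule sum_sq_orth)
      fix i k assume ik: "i \<in> {1..n}" "k \<in> {1..n}" "i \<noteq> k"
      show "expectation (\<lambda>\<omega>. D i \<omega> * D k \<omega>) = 0"
      proof (cases "i < k")
        case True thus ?thesis using EDD ik by auto
      next
        case False
        hence "k < i" using ik by auto
        hence "expectation (\<lambda>\<omega>. D k \<omega> * D i \<omega>) = 0" using EDD ik by auto
        thus ?thesis by (simp add: mult.commute)
      qed
    qed (auto intro!: intDD)
    also have "\<dots> = (\<Sum>i=1..n. real (i - 1) * v\<^sup>2)" by (rule sum.cong) (auto simp: ED2)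
    also have "\<dots> = v\<^sup>2 * (\<Sum>i=1..n. real (i - 1))" by (simp only: sum_distrib_left mult.commute)
    finally show ?thesis by (simp only: gauss_real)
  qed
  define c where "c = 2 / (real n * (real n - 1))"
  have c0: "c \<ge> 0" using nr by (simp add: c_def)
  define A where "A \<omega> = (1 / real n) * (\<Sum>i=1..n. Z i \<omega>)" for \<omega>
  define B where "B \<omega> = c * (\<Sum>i=1..n. D i \<omega>)" for \<omega>
  have Am[measurable]: "A \<in> borel_measurable M" unfolding A_def by measurable
  have Bm[measurable]: "B \<in> borel_measurable M" unfolding B_def by measurable
  define svar where "svar \<omega> = (1/(real n - 1)) * (\<Sum>i=1..n. (X i \<omega> - (1/real n) * (\<Sum>k=1..n. X k \<omega>))\<^sup>2)" for \<omega>
  have svar_eq: "svar \<omega> - v = A \<omega> - B \<omega>" for \<omega>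
  proof -
    have "svar \<omega> = (1/real n) * (\<Sum>i=1..n. (X i \<omega>)\<^sup>2) - c * (\<Sum>i=1..n. D i \<omega>)"
      unfolding svar_def c_def D_def W_def by (rule svar_identity[OF n])
    moreover have "(\<Sum>i=1..n. Z i \<omega>) = (\<Sum>i=1..n. (X i \<omega>)\<^sup>2) - real n * v"
      by (simp add: Z_def sum_subtractf)
    ultimately show ?thesis using nr by (simp add: A_def B_def field_simps)
  qed
  have bA: "\<bar>A \<omega>\<bar> \<le> (1 + \<bar>v\<bar>) * Q \<omega>" for \<omega>
  proof -
    have "\<bar>\<Sum>i=1..n. Z i \<omega>\<bar> \<le> real (card {1..n}) * ((1 + \<bar>v\<bar>) * Q \<omega>)"
      by (rule sum_abs_bound) (rule bZ)
    thus ?thesis using nr by (simp add: A_def abs_mult field_simps)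
  qed
  have bB: "\<bar>B \<omega>\<bar> \<le> (c * real n * real n) * Q \<omega>" for \<omega>
  proof -
    have "\<bar>\<Sum>i=1..n. D i \<omega>\<bar> \<le> real (card {1..n}) * (real n * Q \<omega>)"
      by (rule sum_abs_bound) (rule bD)
    hence "c * \<bar>\<Sum>i=1..n. D i \<omega>\<bar> \<le> c * (real n * (real n * Q \<omega>))"
      using c0 by (intro mult_left_mono) auto
    thus ?thesis using c0 by (simp add: B_def abs_mult algebra_simps)
  qed
  define K where "K = (1 + \<bar>v\<bar>) + c * real n * real n"
  have K0: "K \<ge> 0" using c0 by (simp add: K_def)
  have bAB: "\<bar>A \<omega> - B \<omega>\<bar> \<le> K * Q \<omega>" for \<omega>
    using bA[of \<omega>] bB[of \<omega>] abs_triangle_ineq4[of "A \<omega>" "B \<omega>"] by (simp add: K_def algebra_simps)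
  have intAB: "integrable M (\<lambda>\<omega>. (A \<omega> - B \<omega>) * (A \<omega> - B \<omega>))"
    by (rule prodQ[of _ _ K K]) (use bAB K0 in auto)
  have intA: "integrable M (\<lambda>\<omega>. A \<omega> * A \<omega>)"
    by (rule prodQ[of _ _ "1 + \<bar>v\<bar>" "1 + \<bar>v\<bar>"]) (use bA in auto)
  have intB: "integrable M (\<lambda>\<omega>. B \<omega> * B \<omega>)"
    by (rule prodQ[of _ _ "c * real n * real n" "c * real n * real n"]) (use bB c0 in auto)
  have EA: "expectation (\<lambda>\<omega>. A \<omega> * A \<omega>) = (1 / real n)\<^sup>2 * (real n * (\<mu> - v\<^sup>2))"
  proof -
    have "(\<lambda>\<omega>. A \<omega> * A \<omega>) = (\<lambda>\<omega>. (1 / real n)\<^sup>2 * (\<Sum>i=1..n. Z i \<omega>)\<^sup>2)"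
      by (auto simp: A_def power2_eq_square)
    thus ?thesis using ESZ by simp
  qed
  have EB: "expectation (\<lambda>\<omega>. B \<omega> * B \<omega>) = c\<^sup>2 * (v\<^sup>2 * (real n * (real n - 1) / 2))"
  proof -
    have "(\<lambda>\<omega>. B \<omega> * B \<omega>) = (\<lambda>\<omega>. c\<^sup>2 * (\<Sum>i=1..n. D i \<omega>)\<^sup>2)"
      by (auto simp: B_def power2_eq_square)
    thus ?thesis using ESD by simp
  qed
  have "expectation (\<lambda>\<omega>. (svar \<omega> - v)\<^sup>2) = expectation (\<lambda>\<omega>. (A \<omega> - B \<omega>) * (A \<omega> - B \<omega>))"
    by (simp add: svar_eq power2_eq_square)
  also have "\<dots> \<le> expectation (\<lambda>\<omega>. 2 * (A \<omega> * A \<omega>) + 2 * (B \<omega> * B \<omega>))"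
  proof (rule integral_mono)
    show "integrable M (\<lambda>\<omega>. 2 * (A \<omega> * A \<omega>) + 2 * (B \<omega> * B \<omega>))" using intA intB by auto
    fix \<omega>
    have "0 \<le> (A \<omega> + B \<omega>) * (A \<omega> + B \<omega>)" by simp
    thus "(A \<omega> - B \<omega>) * (A \<omega> - B \<omega>) \<le> 2 * (A \<omega> * A \<omega>) + 2 * (B \<omega> * B \<omega>)"
      by (simp add: algebra_simps)
  qed (rule intAB)
  also have "\<dots> = 2 * expectation (\<lambda>\<omega>. A \<omega> * A \<omega>) + 2 * expectation (\<lambda>\<omega>. B \<omega> * B \<omega>)"
    using intA intB by simp
  also have "\<dots> = 2 * (\<mu> - v\<^sup>2) / real n + 4 * v\<^sup>2 / (real n * (real n - 1))"
  proof -
    have n0: "real n \<noteq> 0" "real n - 1 \<noteq> 0" using nr by auto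
    have t1: "2 * ((1/real n)\<^sup>2 * (real n * (\<mu> - v\<^sup>2))) = 2*(\<mu> - v\<^sup>2)/real n"
      using n0 by (simp add: power2_eq_square field_simps)
    have t2: "2 * (c\<^sup>2 * (v\<^sup>2 * (real n * (real n - 1) / 2))) = 4 * v\<^sup>2 / (real n * (real n - 1))"
    proof -
      have aux: "\<And>m::real. m \<noteq> 0 \<Longrightarrow> 2 * ((2/m)\<^sup>2 * (v\<^sup>2 * (m/2))) = 4 * v\<^sup>2 / m"
        by (simp add: power2_eq_square field_simps)
      show ?thesis unfolding c_def by (rule aux) (use n0 in simp)
    qed
    show ?thesis unfolding EA EB t1 t2 ..
  qed
  finally have fin: "expectation (\<lambda>\<omega>. (svar \<omega> - v)\<^sup>2) \<le> 2 * (\<mu> - v\<^sup>2) / real n + 4 * v\<^sup>2 / (real n * (real n - 1))" .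
  have "integrable M (\<lambda>\<omega>. (svar \<omega> - v)\<^sup>2)"
    using intAB by (simp add: svar_eq power2_eq_square)
  moreover have "v\<^sup>2 \<le> \<mu>"
  proof -
    have "0 \<le> expectation (\<lambda>\<omega>. (Z 1 \<omega>)\<^sup>2)" by (rule Bochner_Integration.integral_nonneg) simp
    moreover have "expectation (\<lambda>\<omega>. (Z 1 \<omega>)\<^sup>2) = \<mu> - v\<^sup>2" by (rule EZ2) simp
    ultimately show ?thesis by linarith
  qed
  ultimately show ?thesis using fin unfolding svar_def v_def \<mu>_def by simp
qed

end


lemma min_ratio:
  fixes a b a' b' \<rho> :: real
  assumes "0 \<le> a" "0 \<le> b" "a/\<rho> \<le> a'" "a' \<le> \<rho>*a" "b/\<rho> \<le> b'" "b' \<le> \<rho>*b" "\<rho> > 0"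
  shows "min a b / \<rho> \<le> min a' b' \<and> min a' b' \<le> \<rho> * min a b"
proof -
  have "min a b / \<rho> = min (a/\<rho>) (b/\<rho>)" using assms(7) by (simp add: min_divide_distrib_right)
  moreover have "\<rho> * min a b = min (\<rho>*a) (\<rho>*b)" using assms(7) by (simp add: min_mult_distrib_left)
  ultimately show ?thesis using assms by (auto simp: min_def)
qed

lemma scale_ratio:
  fixes x x' f \<rho> :: real
  assumes "x/\<rho> \<le> x'" "x' \<le> \<rho>*x" "0 \<le> f"
  shows "(f*x)/\<rho> \<le> f*x' \<and> f*x' \<le> \<rho>*(f*x)"
proof -
  have "f * (x/\<rho>) \<le> f*x'" using assms by (intro mult_left_mono) auto
  moreover have "f*x' \<le> f*(\<rho>*x)" using assms by (intro mult_left_mono) auto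
  ultimately show ?thesis by (simp add: algebra_simps)
qed

lemma wsq_nonneg:
  assumes "0 \<le> S" "\<And>j. j \<ge> 1 \<Longrightarrow> 0 \<le> s j"
  shows "0 \<le> wsq \<sigma> e S s j"
proof (induction j)
  case 0 show ?case by simp
next
  case (Suc k) show ?case
  proof (cases k)
    case 0 thus ?thesis using assms by simp
  next
    case (Suc k')
    have "0 \<le> real (Suc (Suc k')) powr (-(1 + e)) * S / s (Suc (Suc k'))"
      using assms by (intro divide_nonneg_nonneg mult_nonneg_nonneg) auto
    moreover have "0 \<le> (\<sigma> (Suc k'))\<^sup>2 * wsq \<sigma> e S s (Suc k') / (\<sigma> (Suc (Suc k')))\<^sup>2"
      using Suc.IH \<open>k = Suc k'\<close> by simp
    ultimately show ?thesis using \<open>k = Suc k'\<close> by simp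
  qed
qed

lemma wsq_ratio:
  fixes \<rho> :: real
  assumes \<rho>: "\<rho> \<ge> 1"
    and nn: "0 \<le> S" "\<And>j. j\<ge>1 \<Longrightarrow> 0 \<le> s j"
    and r: "\<And>j. 1 \<le> j \<Longrightarrow> j \<le> m \<Longrightarrow> S / s j / \<rho> \<le> S' / s' j \<and> S' / s' j \<le> \<rho> * (S / s j)"
  shows "1 \<le> j \<Longrightarrow> j \<le> m \<Longrightarrow> wsq \<sigma> e S s j / \<rho> \<le> wsq \<sigma> e S' s' j \<and> wsq \<sigma> e S' s' j \<le> \<rho> * wsq \<sigma> e S s j"
proof (induction j)
  case 0 thus ?case by simp
next
  case (Suc k) show ?case
  proof (cases k)
    case 0
    have a0: "0 \<le> S / s 1" using nn by simp
    have b0: "0 \<le> 1 / (\<sigma> 1)\<^sup>2" by simp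
    have b1: "1 / (\<sigma> 1)\<^sup>2 / \<rho> \<le> 1 / (\<sigma> 1)\<^sup>2"
      using divide_left_mono[of 1 \<rho> "1 / (\<sigma> 1)\<^sup>2"] b0 \<rho> by simp
    have b2: "1 / (\<sigma> 1)\<^sup>2 \<le> \<rho> * (1 / (\<sigma> 1)\<^sup>2)"
      using b0 \<rho> mult_right_mono[of 1 \<rho> "1 / (\<sigma> 1)\<^sup>2"] by simp
    have "min (S / s 1) (1 / (\<sigma> 1)\<^sup>2) / \<rho> \<le> min (S' / s' 1) (1 / (\<sigma> 1)\<^sup>2)
        \<and> min (S' / s' 1) (1 / (\<sigma> 1)\<^sup>2) \<le> \<rho> * min (S / s 1) (1 / (\<sigma> 1)\<^sup>2)"
      using a0 b0 b1 b2 r[of 1] Suc.prems \<rho> 0 by (intro min_ratio) auto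
    thus ?thesis using 0 by simp
  next
    case (Suc k')
    define j where "j = Suc (Suc k')"
    have j: "1 \<le> j" "j \<le> m" using Suc.prems \<open>k = Suc k'\<close> by (auto simp: j_def)
    have f0: "0 \<le> real j powr (-(1 + e))" by simp
    have a: "(real j powr (-(1 + e)) * (S / s j)) / \<rho> \<le> real j powr (-(1 + e)) * (S' / s' j)
          \<and> real j powr (-(1 + e)) * (S' / s' j) \<le> \<rho> * (real j powr (-(1 + e)) * (S / s j))"
      using r[OF j] f0 by (intro scale_ratio) auto
    have IH: "wsq \<sigma> e S s (Suc k') / \<rho> \<le> wsq \<sigma> e S' s' (Suc k') \<and> wsq \<sigma> e S' s' (Suc k') \<le> \<rho> * wsq \<sigma> e S s (Suc k')"
      using Suc.IH Suc.prems \<open>k = Suc k'\<close> by auto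
    have g0: "0 \<le> (\<sigma> (Suc k'))\<^sup>2 / (\<sigma> (Suc (Suc k')))\<^sup>2" by simp
    have b: "((\<sigma> (Suc k'))\<^sup>2 / (\<sigma> (Suc (Suc k')))\<^sup>2 * wsq \<sigma> e S s (Suc k')) / \<rho> \<le> (\<sigma> (Suc k'))\<^sup>2 / (\<sigma> (Suc (Suc k')))\<^sup>2 * wsq \<sigma> e S' s' (Suc k')
          \<and> (\<sigma> (Suc k'))\<^sup>2 / (\<sigma> (Suc (Suc k')))\<^sup>2 * wsq \<sigma> e S' s' (Suc k') \<le> \<rho> * ((\<sigma> (Suc k'))\<^sup>2 / (\<sigma> (Suc (Suc k')))\<^sup>2 * wsq \<sigma> e S s (Suc k'))"
      using IH g0 by (intro scale_ratio) auto
    have n1: "0 \<le> real j powr (-(1 + e)) * (S / s j)" using nn j by simp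
    have n2: "0 \<le> (\<sigma> (Suc k'))\<^sup>2 / (\<sigma> (Suc (Suc k')))\<^sup>2 * wsq \<sigma> e S s (Suc k')"
      using wsq_nonneg[OF nn] by simp
    have "min (real j powr (-(1 + e)) * (S / s j)) ((\<sigma> (Suc k'))\<^sup>2 / (\<sigma> (Suc (Suc k')))\<^sup>2 * wsq \<sigma> e S s (Suc k')) / \<rho>
          \<le> min (real j powr (-(1 + e)) * (S' / s' j)) ((\<sigma> (Suc k'))\<^sup>2 / (\<sigma> (Suc (Suc k')))\<^sup>2 * wsq \<sigma> e S' s' (Suc k'))
        \<and> min (real j powr (-(1 + e)) * (S' / s' j)) ((\<sigma> (Suc k'))\<^sup>2 / (\<sigma> (Suc (Suc k')))\<^sup>2 * wsq \<sigma> e S' s' (Suc k'))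
          \<le> \<rho> * min (real j powr (-(1 + e)) * (S / s j)) ((\<sigma> (Suc k'))\<^sup>2 / (\<sigma> (Suc (Suc k')))\<^sup>2 * wsq \<sigma> e S s (Suc k'))"
      using a b n1 n2 \<rho> by (intro min_ratio) auto
    thus ?thesis using \<open>k = Suc k'\<close> by (simp add: j_def mult.commute times_divide_eq_left)
  qed
qed


lemma wsq_meas:
  assumes "S \<in> borel_measurable M" "\<And>j. s j \<in> borel_measurable M"
  shows "(\<lambda>\<omega>. wsq \<sigma> e (S \<omega>) (\<lambda>j. s j \<omega>) j) \<in> borel_measurable M"
proof (induction j)
  case 0 show ?case by simp
next
  case (Suc k) show ?case
  proof (cases k)
    case 0 thus ?thesis using assms by simp
  next
    case (Suc k')
    thus ?thesis using Suc.IH assms by simp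
  qed
qed

lemma mcut_le: "real (mcut e n) \<le> real n powr (1 - e)"
proof -
  have "0 \<le> real n powr (1 - e)" by simp
  hence "real (nat \<lfloor>real n powr (1 - e)\<rfloor>) = real_of_int \<lfloor>real n powr (1 - e)\<rfloor>" by simp
  also have "\<dots> \<le> real n powr (1 - e)" by (rule of_int_floor_le)
  finally show ?thesis unfolding mcut_def .
qed

lemma mcut_ratio:
  assumes "n \<ge> 1"
  shows "real (mcut e n) / real n \<le> real n powr (-e)"
proof -
  have "real (mcut e n) / real n \<le> real n powr (1 - e) / real n"
    using mcut_le[of e n] assms by (intro divide_right_mono) auto
  also have "\<dots> = real n powr (-e)"
    using assms by (simp add: powr_diff powr_minus_divide)
  finally show ?thesis .
qed

lemma shift_sum: "(\<Sum>i<n. g (Suc i)) = (\<Sum>j=1..n. (g j :: 'a::comm_monoid_add))"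
  by (induction n) auto

lemma powr_at_top: "0 < (a::real) \<Longrightarrow> filterlim (\<lambda>x::real. x powr a) at_top at_top"
  by real_asymp

lemma mcut_at_top: assumes "e < 1" shows "filterlim (mcut e) sequentially sequentially"
proof -
  have "filterlim (\<lambda>n. real n powr (1 - e)) at_top sequentially"
    by (rule filterlim_compose[OF powr_at_top filterlim_real_sequentially]) (use assms in simp)
  hence "filterlim (\<lambda>n. floor (real n powr (1 - e))) at_top sequentially"
    by (rule filterlim_compose[OF filterlim_floor_sequentially])
  hence "filterlim (\<lambda>n. nat (floor (real n powr (1 - e)))) sequentially sequentially"
    by (rule filterlim_compose[OF filterlim_nat_sequentially])
  thus ?thesis unfolding mcut_def[abs_def] .
qed

lemma sample_var_cong:
  assumes "\<And>i. i \<ge> 1 \<Longrightarrow> Y' i = Y i"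
  shows "sample_var Y u = sample_var Y' u"
proof (intro ext)
  fix n j \<omega>
  have m: "sample_mean Y n \<omega> = sample_mean Y' n \<omega>"
    unfolding sample_mean_def using assms by (intro arg_cong[where f="\<lambda>x. _ *\<^sub>R x"] sum.cong) auto
  show "sample_var Y u n j \<omega> = sample_var Y' u n j \<omega>"
    unfolding sample_var_def m using assms by (intro arg_cong[where f="\<lambda>x. _ * x"] sum.cong) auto
qed

theorem mainTheorem6:
  fixes K :: "'x::{real_inner, banach, second_countable_topology} \<Rightarrow> 'y::{real_inner, banach, second_countable_topology}"
    and \<sigma> :: "nat \<Rightarrow> real" and e :: "nat \<Rightarrow> 'x" and u :: "nat \<Rightarrow> 'y"
    and M :: "'a measure" and Y :: "nat \<Rightarrow> 'a \<Rightarrow> 'y" and yhat :: 'y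
    and p q C Cp \<epsilon>1 \<epsilon>2 :: real
  assumes K_compact: "compact_linear_op K"
    and K_dense: "closure (range K) = UNIV"
    and e_orth: "\<And>i j. i \<ge> 1 \<Longrightarrow> j \<ge> 1 \<Longrightarrow> e i \<bullet> e j = (if i = j then 1 else 0)"
    and u_orth: "\<And>i j. i \<ge> 1 \<Longrightarrow> j \<ge> 1 \<Longrightarrow> u i \<bullet> u j = (if i = j then 1 else 0)"
    and \<sigma>_pos: "\<And>j. j \<ge> 1 \<Longrightarrow> \<sigma> j > 0"
    and \<sigma>_mono: "\<And>i j. 1 \<le> i \<Longrightarrow> i \<le> j \<Longrightarrow> \<sigma> j \<le> \<sigma> i"
    and \<sigma>_lim: "\<sigma> \<longlonglongrightarrow> 0"
    and svd: "\<And>x. ((\<lambda>j. (\<sigma> j * (x \<bullet> e j)) *\<^sub>R u j) has_sum K x) {1..}"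
    and M: "prob_space M"
    and Y_meas: "\<And>i. i \<ge> 1 \<Longrightarrow> Y i \<in> borel_measurable M"
    and Y_indep: "prob_space.indep_vars M (\<lambda>_. borel) Y {1..}"
    and Y_ident: "\<And>i. i \<ge> 1 \<Longrightarrow> distr M borel (Y i) = distr M borel (Y 1)"
    and Y_int: "integrable M (Y 1)"
    and Y_mean: "integral\<^sup>L M (Y 1) = yhat"
    and pq: "q > p - 1" "p - 1 > 0"
    and \<sigma>_rate: "\<exists>c1 c2. c1 > 0 \<and> c2 > 0 \<and>
                   (\<forall>j\<ge>1. c1 * real j powr (-q) \<le> (\<sigma> j)\<^sup>2 \<and> (\<sigma> j)\<^sup>2 \<le> c2 * real j powr (-q))"
    and v_pos: "\<And>j. j \<ge> 1 \<Longrightarrow> 0 < integral\<^sup>L M (\<lambda>\<omega>. ((Y 1 \<omega> - yhat) \<bullet> u j)\<^sup>2)"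
    and v_bound: "\<And>j. j \<ge> 1 \<Longrightarrow>
                   integral\<^sup>L M (\<lambda>\<omega>. ((Y 1 \<omega> - yhat) \<bullet> u j)\<^sup>2) \<le> Cp * real j powr (-p)"
    and m4_int: "\<And>j. j \<ge> 1 \<Longrightarrow> integrable M (\<lambda>\<omega>. ((Y 1 \<omega> - yhat) \<bullet> u j) ^ 4)"
    and m4_bound: "\<And>j. j \<ge> 1 \<Longrightarrow>
                   integral\<^sup>L M (\<lambda>\<omega>. ((Y 1 \<omega> - yhat) \<bullet> u j) ^ 4)
                     \<le> C * (integral\<^sup>L M (\<lambda>\<omega>. ((Y 1 \<omega> - yhat) \<bullet> u j)\<^sup>2))\<^sup>2"
    and \<epsilon>1: "0 < \<epsilon>1" "\<epsilon>1 < 1"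
    and \<epsilon>2: "0 < \<epsilon>2" "\<epsilon>2 < min 1 (p - 1)"
  shows
    "(let v = (\<lambda>j. integral\<^sup>L M (\<lambda>\<omega>. ((Y 1 \<omega> - yhat) \<bullet> u j)\<^sup>2));
          V = integral\<^sup>L M (\<lambda>\<omega>. (norm (Y 1 \<omega> - yhat))\<^sup>2);
          d = weight \<sigma> \<epsilon>2 V v;
          \<gamma> = sqrt (\<Sum>j. d (Suc j) ^ 2 * v (Suc j))
      in (\<forall>\<eta>>0. \<forall>n\<ge>2.
            measure M {\<omega> \<in> space M. \<forall>j\<in>{1..mcut \<epsilon>1 n}.
                 \<bar>sample_var Y u n j \<omega> - v j\<bar> \<le> \<eta> * v j}
              \<ge> 1 - 4 * C / \<eta>\<^sup>2 * real n powr (-\<epsilon>1))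
       \<and> (\<forall>\<eta>>0. (\<lambda>n. 1 - 4 * C / \<eta>\<^sup>2 * real n powr (-\<epsilon>1)) \<longlonglongrightarrow> 1)
       \<and> ((\<lambda>n. measure M {\<omega> \<in> space M. \<forall>j\<in>{1..mcut \<epsilon>1 n}.
                 d j / 2 \<le> rand_weight \<sigma> \<epsilon>1 \<epsilon>2 Y u n j \<omega>
                 \<and> rand_weight \<sigma> \<epsilon>1 \<epsilon>2 Y u n j \<omega> \<le> 2 * d j}) \<longlonglongrightarrow> 1)
       \<and> ((\<lambda>n. measure M {\<omega> \<in> space M.
                 \<bar>sqrt (real n) * delta' \<sigma> \<epsilon>1 \<epsilon>2 Y u n \<omega> - \<gamma>\<bar> \<le> \<gamma> / 2}) \<longlonglongrightarrow> 1))"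

proof -
  interpret P: prob_space M by (rule M)
  define v where "v = (\<lambda>j. integral\<^sup>L M (\<lambda>\<omega>. ((Y 1 \<omega> - yhat) \<bullet> u j)\<^sup>2))"
  define V where "V = integral\<^sup>L M (\<lambda>\<omega>. (norm (Y 1 \<omega> - yhat))\<^sup>2)"
  define d where "d = weight \<sigma> \<epsilon>2 V v"
  define \<gamma> where "\<gamma> = sqrt (\<Sum>j. d (Suc j) ^ 2 * v (Suc j))"
  define Y' where "Y' i = (if i = 0 then (\<lambda>_. yhat) else Y i)" for i
  have Y'm[measurable]: "Y' i \<in> borel_measurable M" for i
    unfolding Y'_def using Y_meas by auto
  have Y'Y: "i \<ge> 1 \<Longrightarrow> Y' i = Y i" for i by (simp add: Y'_def)
  have svY: "sample_var Y u = sample_var Y' u" by (rule sample_var_cong) (simp add: Y'Y)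
  define X where "X j i \<omega> = (Y' i \<omega> - yhat) \<bullet> u j" for j i \<omega>
  have Xm[measurable]: "X j i \<in> borel_measurable M" for j i unfolding X_def by measurable
  have X_ind: "P.indep_vars (\<lambda>_. borel) (X j) {1..}" for j
  proof -
    have "P.indep_vars (\<lambda>_. borel) (\<lambda>i \<omega>. (\<lambda>y. (y - yhat) \<bullet> u j) (Y i \<omega>)) {1..}"
      by (rule P.indep_vars_compose2[OF Y_indep]) measurable
    thus ?thesis by (rule P.indep_vars_cong[THEN iffD1, rotated 3]) (auto simp: X_def Y'Y)
  qed
  have X_ident: "distr M borel (X j i) = distr M borel (X j 1)" if "i \<ge> 1" for i j
  proof -
    have eqX: "X j k = (\<lambda>y. (y - yhat) \<bullet> u j) \<circ> Y k" if "k \<ge> 1" for k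
      using that by (auto simp: X_def Y'Y)
    have e1: "X j 1 = (\<lambda>y. (y - yhat) \<bullet> u j) \<circ> Y 1" by (rule eqX) simp
    have "distr M borel (X j i) = distr (distr M borel (Y i)) borel (\<lambda>y. (y - yhat) \<bullet> u j)"
      unfolding eqX[OF that] using Y_meas[OF that] by (subst distr_distr) auto
    also have "\<dots> = distr (distr M borel (Y 1)) borel (\<lambda>y. (y - yhat) \<bullet> u j)" using Y_ident[OF that] by simp
    also have "\<dots> = distr M borel (X j 1)"
      unfolding e1 using Y_meas[of 1] by (subst distr_distr) auto
    finally show ?thesis .
  qed
  have X1: "X j 1 = (\<lambda>\<omega>. (Y 1 \<omega> - yhat) \<bullet> u j)" for j by (auto simp: X_def Y'Y)
  have X_mean: "P.expectation (X j 1) = 0" for j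
  proof -
    have iY: "integrable M (\<lambda>\<omega>. Y 1 \<omega> - yhat)" using Y_int by simp
    have "P.expectation (\<lambda>\<omega>. Y 1 \<omega> - yhat) = 0" using Y_int Y_mean by (simp add: P.prob_space)
    hence "P.expectation (\<lambda>\<omega>. (Y 1 \<omega> - yhat) \<bullet> u j) = 0" using iY by simp
    thus ?thesis unfolding X1 .
  qed
  define svar where "svar n j \<omega> = (1/(real n - 1)) * (\<Sum>i=1..n. (X j i \<omega> - (1/real n) * (\<Sum>k=1..n. X j k \<omega>))\<^sup>2)" for n j \<omega>
  have svarm[measurable]: "svar n j \<in> borel_measurable M" for n j unfolding svar_def by measurable
  have sv_eq: "sample_var Y u n j \<omega> = svar n j \<omega>" if n: "n \<ge> 1" for n j \<omega>
  proof -
    have m: "sample_mean Y' n \<omega> \<bullet> u j = (1/real n) * (\<Sum>k=1..n. Y' k \<omega> \<bullet> u j)"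
      by (simp add: sample_mean_def inner_sum_left)
    have s: "(\<Sum>k=1..n. X j k \<omega>) = (\<Sum>k=1..n. Y' k \<omega> \<bullet> u j) - real n * (yhat \<bullet> u j)"
      by (simp add: X_def inner_diff_left sum_subtractf)
    have "(Y' i \<omega> - sample_mean Y' n \<omega>) \<bullet> u j = X j i \<omega> - (1/real n) * (\<Sum>k=1..n. X j k \<omega>)" for i
      unfolding s inner_diff_left m using n by (simp add: X_def inner_diff_left field_simps)
    thus ?thesis unfolding svY sample_var_def svar_def by simp
  qed
  define \<mu> where "\<mu> = (\<lambda>j. integral\<^sup>L M (\<lambda>\<omega>. ((Y 1 \<omega> - yhat) \<bullet> u j) ^ 4))"
  have vb: "integrable M (\<lambda>\<omega>. (svar n j \<omega> - v j)\<^sup>2)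
      \<and> P.expectation (\<lambda>\<omega>. (svar n j \<omega> - v j)\<^sup>2) \<le> 2 * (\<mu> j - (v j)\<^sup>2) / real n + 4 * (v j)\<^sup>2 / (real n * (real n - 1))
      \<and> (v j)\<^sup>2 \<le> \<mu> j" if n: "n \<ge> 2" and j: "j \<ge> 1" for n j
  proof -
    have i4: "integrable M (\<lambda>\<omega>. (X j 1 \<omega>)^4)" using m4_int[OF j] unfolding X1 .
    show ?thesis
      using P.var_bound[OF X_ind Xm X_ident i4 X_mean n] unfolding X1 svar_def v_def \<mu>_def by simp
  qed
  have vpos: "v j > 0" if "j \<ge> 1" for j using v_pos[OF that] by (simp add: v_def)
  have C1: "C \<ge> 1"
  proof -
    have "(v 1)\<^sup>2 \<le> \<mu> 1" using vb[of 2 1] by simp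
    also have "\<mu> 1 \<le> C * (v 1)\<^sup>2" using m4_bound[of 1] by (simp add: \<mu>_def v_def)
    finally have "1 * (v 1)\<^sup>2 \<le> C * (v 1)\<^sup>2" by simp
    moreover have "(v 1)\<^sup>2 > 0" using vpos[of 1] by simp
    ultimately show ?thesis by (simp add: mult_le_cancel_right)
  qed
  have ebound: "P.expectation (\<lambda>\<omega>. (svar n j \<omega> - v j)\<^sup>2) \<le> 4 * C * (v j)\<^sup>2 / real n"
    if n: "n \<ge> 2" and j: "j \<ge> 1" for n j
  proof -
    have nr: "real n \<ge> 2" using n by simp
    have mu: "\<mu> j \<le> C * (v j)\<^sup>2" using m4_bound[OF j] by (simp add: \<mu>_def v_def)
    have c: "4 * (v j)\<^sup>2 / (real n * (real n - 1)) \<le> 4 * (v j)\<^sup>2 / (real n * 1)"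
      by (rule divide_left_mono) (use nr in auto)
    have a: "P.expectation (\<lambda>\<omega>. (svar n j \<omega> - v j)\<^sup>2) \<le> 2 * (\<mu> j - (v j)\<^sup>2) / real n + 4 * (v j)\<^sup>2 / (real n * (real n - 1))"
      using vb[OF n j] by blast
    have b: "2 * (\<mu> j - (v j)\<^sup>2) / real n \<le> 2 * (C * (v j)\<^sup>2 - (v j)\<^sup>2) / real n"
      by (rule divide_right_mono) (use mu in auto)
    have "P.expectation (\<lambda>\<omega>. (svar n j \<omega> - v j)\<^sup>2) \<le> 2 * (C * (v j)\<^sup>2 - (v j)\<^sup>2) / real n + 4 * (v j)\<^sup>2 / real n"
      using a b c by simp
    also have "\<dots> = (2 * C + 2) * (v j)\<^sup>2 / real n" using nr by (simp add: field_simps)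
    also have "\<dots> \<le> (4 * C) * (v j)\<^sup>2 / real n"
      using C1 nr by (intro divide_right_mono mult_right_mono) auto
    finally show ?thesis by simp
  qed
  have cheb: "P.prob {\<omega>\<in>space M. \<not> \<bar>svar n j \<omega> - v j\<bar> \<le> \<eta> * v j} \<le> 4 * C / (real n * \<eta>\<^sup>2)"
    if n: "n \<ge> 2" and j: "j \<ge> 1" and \<eta>: "\<eta> > 0" for n j \<eta>
  proof -
    have c: "(\<eta> * v j)\<^sup>2 > 0" using vpos[OF j] \<eta> by simp
    have "{\<omega>\<in>space M. \<not> \<bar>svar n j \<omega> - v j\<bar> \<le> \<eta> * v j} \<subseteq> {\<omega>\<in>space M. (svar n j \<omega> - v j)\<^sup>2 \<ge> (\<eta> * v j)\<^sup>2}"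
    proof safe
      fix \<omega> assume "\<not> \<bar>svar n j \<omega> - v j\<bar> \<le> \<eta> * v j"
      hence "\<eta> * v j \<le> \<bar>svar n j \<omega> - v j\<bar>" "0 \<le> \<eta> * v j" using vpos[OF j] \<eta> by auto
      hence "(\<eta> * v j)\<^sup>2 \<le> \<bar>svar n j \<omega> - v j\<bar>\<^sup>2" by (intro power_mono) auto
      thus "(\<eta> * v j)\<^sup>2 \<le> (svar n j \<omega> - v j)\<^sup>2" by simp
    qed
    hence "P.prob {\<omega>\<in>space M. \<not> \<bar>svar n j \<omega> - v j\<bar> \<le> \<eta> * v j} \<le> P.prob {\<omega>\<in>space M. (svar n j \<omega> - v j)\<^sup>2 \<ge> (\<eta> * v j)\<^sup>2}"
      by (intro P.finite_measure_mono) auto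
    also have "\<dots> \<le> P.expectation (\<lambda>\<omega>. (svar n j \<omega> - v j)\<^sup>2) / (\<eta> * v j)\<^sup>2"
      by (rule integral_Markov_inequality_measure[where A="space M"]) (use vb[OF n j] c in auto)
    also have "\<dots> \<le> (4 * C * (v j)\<^sup>2 / real n) / (\<eta> * v j)\<^sup>2"
      by (rule divide_right_mono) (use ebound[OF n j] c in auto)
    also have "\<dots> = 4 * C / (real n * \<eta>\<^sup>2)"
      using vpos[OF j] \<eta> n by (simp add: field_simps power2_eq_square)
    finally show ?thesis .
  qed
  have part1: "P.prob {\<omega> \<in> space M. \<forall>j\<in>{1..mcut \<epsilon>1 n}. \<bar>sample_var Y u n j \<omega> - v j\<bar> \<le> \<eta> * v j}
                 \<ge> 1 - 4 * C / \<eta>\<^sup>2 * real n powr (-\<epsilon>1)" if \<eta>: "\<eta> > 0" and n: "n \<ge> 2" for \<eta> n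
  proof -
    define m where "m = mcut \<epsilon>1 n"
    define B where "B j = {\<omega>\<in>space M. \<not> \<bar>svar n j \<omega> - v j\<bar> \<le> \<eta> * v j}" for j
    have Bs: "B j \<in> sets M" for j unfolding B_def by measurable
    have eq: "{\<omega> \<in> space M. \<forall>j\<in>{1..m}. \<bar>sample_var Y u n j \<omega> - v j\<bar> \<le> \<eta> * v j} = space M - (\<Union>j\<in>{1..m}. B j)"
      using n by (auto simp: B_def sv_eq)
    have U: "(\<Union>j\<in>{1..m}. B j) \<in> sets M" using Bs by auto
    have "P.prob (\<Union>j\<in>{1..m}. B j) \<le> (\<Sum>j\<in>{1..m}. P.prob (B j))"
      by (rule P.finite_measure_subadditive_finite) (use Bs in auto)
    also have "\<dots> \<le> (\<Sum>j\<in>{1..m}. 4 * C / (real n * \<eta>\<^sup>2))"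
      by (rule sum_mono) (use cheb n \<eta> in \<open>auto simp: B_def\<close>)
    also have "\<dots> = (real m / real n) * (4 * C / \<eta>\<^sup>2)" by simp
    also have "\<dots> \<le> real n powr (-\<epsilon>1) * (4 * C / \<eta>\<^sup>2)"
      by (rule mult_right_mono) (use mcut_ratio[of n \<epsilon>1] n C1 in \<open>auto simp: m_def\<close>)
    finally have "P.prob (\<Union>j\<in>{1..m}. B j) \<le> 4 * C / \<eta>\<^sup>2 * real n powr (-\<epsilon>1)" by (simp add: mult.commute)
    thus ?thesis unfolding m_def[symmetric] eq P.prob_compl[OF U] by simp
  qed
  have part2: "(\<lambda>n. 1 - 4 * C / \<eta>\<^sup>2 * real n powr (-\<epsilon>1)) \<longlonglongrightarrow> 1" for \<eta>
  proof -
    have "(\<lambda>n. real n powr (-\<epsilon>1)) \<longlonglongrightarrow> 0"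
      by (rule tendsto_neg_powr) (use \<epsilon>1 filterlim_real_sequentially in auto)
    hence "(\<lambda>n. 1 - 4 * C / \<eta>\<^sup>2 * real n powr (-\<epsilon>1)) \<longlonglongrightarrow> 1 - 4 * C / \<eta>\<^sup>2 * 0"
      by (intro tendsto_intros)
    thus ?thesis by simp
  qed
  have approx: "\<exists>c N. norm (y - (\<Sum>k=1..N. c k *\<^sub>R u k)) < \<epsilon>" if \<epsilon>: "\<epsilon> > 0" for y \<epsilon>
  proof -
    have "y \<in> closure (range K)" using K_dense by simp
    then obtain z where z: "z \<in> range K" "dist z y < \<epsilon>/2" using closure_approachable \<epsilon> by (metis half_gt_zero)
    then obtain x where zx: "z = K x" by auto
    define c where "c k = \<sigma> k * (x \<bullet> e k)" for k
    define f where "f j = (if j \<ge> 1 then c j *\<^sub>R u j else 0)" for j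
    have "(f has_sum K x) UNIV"
      using svd[of x] by (subst has_sum_cong_neutral[where T="{1..}" and g="\<lambda>j. (\<sigma> j * (x \<bullet> e j)) *\<^sub>R u j"]) (auto simp: f_def c_def)
    hence "f sums K x" by (rule has_sum_imp_sums)
    hence "(\<lambda>N. \<Sum>j<N. f j) \<longlonglongrightarrow> K x" by (simp add: sums_def)
    then obtain N0 where N0: "\<And>N. N \<ge> N0 \<Longrightarrow> norm ((\<Sum>j<N. f j) - K x) < \<epsilon>/2"
      using \<epsilon> unfolding LIMSEQ_iff by (metis half_gt_zero)
    have eqs: "(\<Sum>j<Suc N0. f j) = (\<Sum>k=1..N0. c k *\<^sub>R u k)"
    proof -
      have "(\<Sum>j<Suc N0. f j) = f 0 + (\<Sum>j<N0. f (Suc j))" by (rule sum.lessThan_Suc_shift)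
      also have "\<dots> = (\<Sum>j=1..N0. f j)" using shift_sum[of f N0] by (simp add: f_def[of 0])
      also have "\<dots> = (\<Sum>k=1..N0. c k *\<^sub>R u k)" by (rule sum.cong) (auto simp: f_def)
      finally show ?thesis .
    qed
    have "norm (y - (\<Sum>k=1..N0. c k *\<^sub>R u k)) \<le> norm (y - K x) + norm (K x - (\<Sum>k=1..N0. c k *\<^sub>R u k))"
      using norm_triangle_ineq[of "y - K x" "K x - (\<Sum>k=1..N0. c k *\<^sub>R u k)"] by simp
    also have "\<dots> < \<epsilon>/2 + \<epsilon>/2"
      using z(2) N0[of "Suc N0"] unfolding zx eqs by (intro add_strict_mono) (auto simp: dist_norm norm_minus_commute)
    finally show ?thesis by auto
  qed
  have pars: "(\<lambda>N. \<Sum>j=1..N. (y \<bullet> u j)\<^sup>2) \<longlonglongrightarrow> (norm y)\<^sup>2" for y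
    by (rule parseval[OF u_orth approx])
  have ptw: "(\<lambda>i. ((Y 1 \<omega> - yhat) \<bullet> u (Suc i))\<^sup>2) sums (norm (Y 1 \<omega> - yhat))\<^sup>2" for \<omega>
    unfolding sums_def shift_sum[where g="\<lambda>j. ((Y 1 \<omega> - yhat) \<bullet> u j)\<^sup>2"] by (rule pars)
  have int_vj: "integrable M (\<lambda>\<omega>. ((Y 1 \<omega> - yhat) \<bullet> u j)\<^sup>2)" if "j \<ge> 1" for j
    using v_pos[OF that] not_integrable_integral_eq by fastforce
  have v_nn: "0 \<le> v j" for j unfolding v_def by (rule Bochner_Integration.integral_nonneg) simp
  have v_sum: "summable (\<lambda>i. v (Suc i))"
  proof (rule summable_comparison_test)
    show "\<exists>N. \<forall>n\<ge>N. norm (v (Suc n)) \<le> Cp * real (Suc n) powr (-p)"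
    proof (intro exI[of _ 0] allI impI)
      fix n :: nat
      have "v (Suc n) \<le> Cp * real (Suc n) powr (-p)" using v_bound[of "Suc n"] unfolding v_def by simp
      thus "norm (v (Suc n)) \<le> Cp * real (Suc n) powr (-p)" using v_nn[of "Suc n"] by simp
    qed
    have "summable (\<lambda>n. real n powr (-p))" using pq by (simp add: summable_real_powr_iff)
    hence "summable (\<lambda>n. real (Suc n) powr (-p))" by (subst summable_Suc_iff)
    thus "summable (\<lambda>n. Cp * real (Suc n) powr (-p))" by (rule summable_mult)
  qed
  have V_eq: "V = (\<Sum>i. v (Suc i))"
  proof -
    let ?f = "\<lambda>i \<omega>. ((Y 1 \<omega> - yhat) \<bullet> u (Suc i))\<^sup>2"
    have "(\<integral>\<omega>. (\<Sum>i. ?f i \<omega>) \<partial>M) = (\<Sum>i. integral\<^sup>L M (?f i))"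
    proof (rule integral_suminf)
      show "integrable M (?f i)" for i by (rule int_vj) simp
      show "AE \<omega> in M. summable (\<lambda>i. norm (?f i \<omega>))"
        using ptw by (auto intro: sums_summable)
      show "summable (\<lambda>i. \<integral>\<omega>. norm (?f i \<omega>) \<partial>M)"
        using v_sum by (simp add: v_def)
    qed
    moreover have "(\<integral>\<omega>. (\<Sum>i. ?f i \<omega>) \<partial>M) = V"
      unfolding V_def by (rule Bochner_Integration.integral_cong) (use sums_unique[OF ptw] in auto)
    ultimately show ?thesis by (simp add: v_def)
  qed
  have Vpos: "V > 0" unfolding V_eq by (rule suminf_pos[OF v_sum]) (simp add: vpos)
  have vsum_lim: "(\<lambda>N. \<Sum>j=1..N. v j) \<longlonglongrightarrow> V"
    using summable_sums[OF v_sum] unfolding V_eq[symmetric] sums_def shift_sum .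
  define w where "w j = wsq \<sigma> \<epsilon>2 V v j" for j
  have V_nn: "0 \<le> V" using Vpos by simp
  have w_nn: "0 \<le> w j" for j unfolding w_def by (rule wsq_nonneg) (use V_nn v_nn in auto)
  have d_sq: "(d j)\<^sup>2 = w j" for j unfolding d_def weight_def w_def using w_nn[of j] by (simp add: w_def)
  have wv_bound: "w j * v j \<le> V * real j powr (-(1 + \<epsilon>2))" if j: "j \<ge> 1" for j
  proof (cases j)
    case 0 thus ?thesis using j by simp
  next
    case (Suc k)
    show ?thesis
    proof (cases k)
      case 0
      have "w j \<le> V / v 1" using Suc 0 by (simp add: w_def)
      hence "w j * v 1 \<le> V / v 1 * v 1" using v_nn[of 1] by (intro mult_right_mono) auto
      thus ?thesis using Suc 0 vpos[of 1] by simp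
    next
      case (Suc k')
      have "w j \<le> real j powr (-(1 + \<epsilon>2)) * V / v j" using Suc \<open>j = Suc k\<close> by (simp add: w_def)
      hence "w j * v j \<le> real j powr (-(1 + \<epsilon>2)) * V / v j * v j" using v_nn[of j] by (intro mult_right_mono) auto
      thus ?thesis using vpos[OF j] by (simp add: mult.commute)
    qed
  qed
  have w_sum: "summable (\<lambda>i. w (Suc i) * v (Suc i))"
  proof (rule summable_comparison_test)
    show "\<exists>N. \<forall>n\<ge>N. norm (w (Suc n) * v (Suc n)) \<le> V * real (Suc n) powr (-(1 + \<epsilon>2))"
      using wv_bound w_nn v_nn by (auto simp del: of_nat_Suc)
    have "summable (\<lambda>n. real n powr (-(1 + \<epsilon>2)))" using \<epsilon>2 by (simp add: summable_real_powr_iff)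
    hence "summable (\<lambda>n. real (Suc n) powr (-(1 + \<epsilon>2)))" by (subst summable_Suc_iff)
    thus "summable (\<lambda>n. V * real (Suc n) powr (-(1 + \<epsilon>2)))" by (rule summable_mult)
  qed
  define Gs where "Gs = (\<Sum>i. w (Suc i) * v (Suc i))"
  have Gs_pos: "Gs > 0" unfolding Gs_def
  proof (rule suminf_pos2[OF w_sum, of 0])
    show "0 \<le> w (Suc n) * v (Suc n)" for n using w_nn v_nn by simp
    have "w 1 > 0" using Vpos vpos[of 1] \<sigma>_pos[of 1] by (simp add: w_def)
    thus "0 < w (Suc 0) * v (Suc 0)" using vpos[of 1] by simp
  qed
  have \<gamma>_eq: "\<gamma> = sqrt Gs" unfolding \<gamma>_def Gs_def by (simp add: d_sq)
  have \<gamma>2: "\<gamma>\<^sup>2 = Gs" using Gs_pos by (simp add: \<gamma>_eq)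
  have wsum_lim: "(\<lambda>N. \<Sum>j=1..N. w j * v j) \<longlonglongrightarrow> Gs"
    using summable_sums[OF w_sum] unfolding Gs_def[symmetric] sums_def shift_sum[where g="\<lambda>j. w j * v j"] .
  have vsum_le: "(\<Sum>j=1..N. v j) \<le> V" for N
  proof -
    have "(\<Sum>i<N. v (Suc i)) \<le> (\<Sum>i. v (Suc i))" by (rule sum_le_suminf[OF v_sum]) (use v_nn in auto)
    thus ?thesis unfolding shift_sum V_eq .
  qed
  have wsum_le: "(\<Sum>j=1..N. w j * v j) \<le> Gs" for N
  proof -
    have "(\<Sum>i<N. w (Suc i) * v (Suc i)) \<le> (\<Sum>i. w (Suc i) * v (Suc i))"
      by (rule sum_le_suminf[OF w_sum]) (use v_nn w_nn in auto)
    thus ?thesis unfolding shift_sum[where g="\<lambda>j. w j * v j"] Gs_def .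
  qed
  have lim1: "(\<lambda>n. \<Sum>j=1..mcut \<epsilon>1 n. v j) \<longlonglongrightarrow> V"
    by (rule filterlim_compose[OF vsum_lim mcut_at_top]) (use \<epsilon>1 in simp)
  have lim2: "(\<lambda>n. \<Sum>j=1..mcut \<epsilon>1 n. w j * v j) \<longlonglongrightarrow> Gs"
    by (rule filterlim_compose[OF wsum_lim mcut_at_top]) (use \<epsilon>1 in simp)
  have ev1: "eventually (\<lambda>n. (9/10) * V < (\<Sum>j=1..mcut \<epsilon>1 n. v j)) sequentially"
    by (rule order_tendstoD(1)[OF lim1]) (use Vpos in simp)
  have ev2: "eventually (\<lambda>n. Gs / 2 < (\<Sum>j=1..mcut \<epsilon>1 n. w j * v j)) sequentially"
    by (rule order_tendstoD(1)[OF lim2]) (use Gs_pos in simp)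
  have svm[measurable]: "sample_var Y u n j \<in> borel_measurable M" for n j
    unfolding svY unfolding sample_var_def[abs_def] sample_mean_def by measurable
  have stm[measurable]: "sample_total \<epsilon>1 Y u n \<in> borel_measurable M" for n
    unfolding sample_total_def[abs_def] by measurable
  have rwm[measurable]: "rand_weight \<sigma> \<epsilon>1 \<epsilon>2 Y u n j \<in> borel_measurable M" for n j
  proof -
    have "(\<lambda>\<omega>. wsq \<sigma> \<epsilon>2 (sample_total \<epsilon>1 Y u n \<omega>) (\<lambda>j. sample_var Y u n j \<omega>) j) \<in> borel_measurable M"
      by (rule wsq_meas) measurable
    hence "(\<lambda>\<omega>. sqrt (wsq \<sigma> \<epsilon>2 (sample_total \<epsilon>1 Y u n \<omega>) (\<lambda>j. sample_var Y u n j \<omega>) j)) \<in> borel_measurable M"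
      by measurable
    thus ?thesis unfolding rand_weight_def[abs_def] weight_def .
  qed
  have dm[measurable]: "delta' \<sigma> \<epsilon>1 \<epsilon>2 Y u n \<in> borel_measurable M" for n
    unfolding delta'_def[abs_def] by measurable
  have key: "(\<forall>j\<in>{1..mcut \<epsilon>1 n}. d j / 2 \<le> rand_weight \<sigma> \<epsilon>1 \<epsilon>2 Y u n j \<omega> \<and> rand_weight \<sigma> \<epsilon>1 \<epsilon>2 Y u n j \<omega> \<le> 2 * d j)
      \<and> \<bar>sqrt (real n) * delta' \<sigma> \<epsilon>1 \<epsilon>2 Y u n \<omega> - \<gamma>\<bar> \<le> \<gamma> / 2"
    if n: "n \<ge> 2" and e1: "(9/10) * V < (\<Sum>j=1..mcut \<epsilon>1 n. v j)"
      and e2: "Gs / 2 < (\<Sum>j=1..mcut \<epsilon>1 n. w j * v j)"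
      and good: "\<forall>j\<in>{1..mcut \<epsilon>1 n}. \<bar>sample_var Y u n j \<omega> - v j\<bar> \<le> 1/10 * v j" for n \<omega>
  proof -
    define m where "m = mcut \<epsilon>1 n"
    define s where "s j = sample_var Y u n j \<omega>" for j
    define S where "S = sample_total \<epsilon>1 Y u n \<omega>"
    have S_sum: "S = (\<Sum>j=1..m. s j)" by (simp add: S_def s_def sample_total_def m_def)
    have s_nn: "0 \<le> s j" for j using n unfolding s_def sample_var_def by (intro mult_nonneg_nonneg sum_nonneg) auto
    have S_nn: "0 \<le> S" unfolding S_sum by (rule sum_nonneg) (use s_nn in auto)
    have sl: "(9/10) * v j \<le> s j" "s j \<le> (11/10) * v j" if "j \<in> {1..m}" for j
    proof -
      have "\<bar>s j - v j\<bar> \<le> 1/10 * v j" using good that unfolding m_def s_def by blast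
      thus "(9/10) * v j \<le> s j" "s j \<le> (11/10) * v j" unfolding abs_le_iff by linarith+
    qed
    have spos: "0 < s j" if "j \<in> {1..m}" for j using sl(1)[OF that] vpos[of j] that by auto
    have Sl: "(81/100) * V \<le> S"
    proof -
      have "(9/10) * (\<Sum>j=1..m. v j) \<le> S" unfolding S_sum sum_distrib_left by (rule sum_mono) (use sl in auto)
      thus ?thesis using e1 unfolding m_def[symmetric] by linarith
    qed
    have Su: "S \<le> (11/10) * V"
    proof -
      have "S \<le> (11/10) * (\<Sum>j=1..m. v j)" unfolding S_sum sum_distrib_left by (rule sum_mono) (use sl in auto)
      thus ?thesis using vsum_le[of m] by linarith
    qed
    have ratio: "V / v j / (3/2) \<le> S / s j \<and> S / s j \<le> (3/2) * (V / v j)" if j: "1 \<le> j" "j \<le> m" for j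
    proof -
      have jm: "j \<in> {1..m}" using j by auto
      have vp: "0 < v j" using vpos j by auto
      have sp: "0 < s j" using spos[OF jm] .
      have a1: "V * s j \<le> V * ((11/10) * v j)" using sl(2)[OF jm] V_nn by (rule mult_left_mono)
      have a2: "((81/100) * V) * v j \<le> S * v j" using Sl vp by (intro mult_right_mono) auto
      have a3: "S * v j \<le> ((11/10) * V) * v j" using Su vp by (intro mult_right_mono) auto
      have a4: "V * ((9/10) * v j) \<le> V * s j" using sl(1)[OF jm] V_nn by (rule mult_left_mono)
      have "V / v j / (3/2) \<le> S / s j \<longleftrightarrow> 2 * (V * s j) \<le> 3 * (S * v j)"
        using vp sp by (simp add: field_simps)
      moreover have "S / s j \<le> (3/2) * (V / v j) \<longleftrightarrow> 2 * (S * v j) \<le> 3 * (V * s j)"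
        using vp sp by (simp add: field_simps)
      moreover have "0 \<le> V * v j" using V_nn vp by simp
      ultimately show ?thesis using a1 a2 a3 a4 by (simp add: algebra_simps)
    qed
    define w' where "w' j = wsq \<sigma> \<epsilon>2 S s j" for j
    have wr: "w j / (3/2) \<le> w' j \<and> w' j \<le> (3/2) * w j" if "j \<in> {1..m}" for j
      unfolding w_def w'_def
      by (rule wsq_ratio[of "3/2" V v m S s]) (use V_nn v_nn ratio that in auto)
    have w'_nn: "0 \<le> w' j" for j unfolding w'_def by (rule wsq_nonneg) (use S_nn s_nn in auto)
    have rw_eq: "rand_weight \<sigma> \<epsilon>1 \<epsilon>2 Y u n j \<omega> = sqrt (w' j)" for j
      by (simp add: rand_weight_def weight_def w'_def S_def s_def[abs_def])
    have p3: "\<forall>j\<in>{1..m}. d j / 2 \<le> rand_weight \<sigma> \<epsilon>1 \<epsilon>2 Y u n j \<omega> \<and> rand_weight \<sigma> \<epsilon>1 \<epsilon>2 Y u n j \<omega> \<le> 2 * d j"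
    proof
      fix j assume jm: "j \<in> {1..m}"
      have dj: "d j = sqrt (w j)" by (simp add: d_def weight_def w_def)
      have "sqrt (w j / 4) \<le> sqrt (w' j)" using wr[OF jm] w_nn[of j] by (intro real_sqrt_le_mono) (auto simp: field_simps)
      moreover have "sqrt (w' j) \<le> sqrt (4 * w j)" using wr[OF jm] w_nn[of j] by (intro real_sqrt_le_mono) (auto simp: field_simps)
      moreover have "sqrt (w j / 4) = sqrt (w j) / 2" by (simp add: real_sqrt_divide)
      moreover have "sqrt (4 * w j) = 2 * sqrt (w j)" by (simp add: real_sqrt_mult)
      ultimately show "d j / 2 \<le> rand_weight \<sigma> \<epsilon>1 \<epsilon>2 Y u n j \<omega> \<and> rand_weight \<sigma> \<epsilon>1 \<epsilon>2 Y u n j \<omega> \<le> 2 * d j"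
        unfolding rw_eq dj by simp
    qed
    define Xs where "Xs = (\<Sum>j=1..m. w' j * s j)"
    have dX: "sqrt (real n) * delta' \<sigma> \<epsilon>1 \<epsilon>2 Y u n \<omega> = sqrt Xs"
    proof -
      have "(\<Sum>j=1..m. (rand_weight \<sigma> \<epsilon>1 \<epsilon>2 Y u n j \<omega>)\<^sup>2 * sample_var Y u n j \<omega>) = Xs"
        unfolding Xs_def rw_eq using w'_nn by (simp add: s_def)
      hence "delta' \<sigma> \<epsilon>1 \<epsilon>2 Y u n \<omega> = sqrt ((1 / real n) * Xs)"
        by (simp add: delta'_def m_def)
      thus ?thesis using n by (simp add: real_sqrt_mult[symmetric])
    qed
    have Xl: "Xs \<ge> (3/5) * (\<Sum>j=1..m. w j * v j)"
    proof -
      have "(3/5) * (\<Sum>j=1..m. w j * v j) = (\<Sum>j=1..m. (w j / (3/2)) * ((9/10) * v j))"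
        by (simp add: sum_distrib_left algebra_simps)
      also have "\<dots> \<le> Xs" unfolding Xs_def
      proof (rule sum_mono)
        fix j assume jm: "j \<in> {1..m}"
        show "w j / (3/2) * ((9/10) * v j) \<le> w' j * s j"
          by (rule mult_mono) (use wr[OF jm] sl[OF jm] w'_nn[of j] v_nn[of j] in auto)
      qed
      finally show ?thesis .
    qed
    have Xu: "Xs \<le> (33/20) * (\<Sum>j=1..m. w j * v j)"
    proof -
      have "Xs \<le> (\<Sum>j=1..m. ((3/2) * w j) * ((11/10) * v j))" unfolding Xs_def
      proof (rule sum_mono)
        fix j assume jm: "j \<in> {1..m}"
        show "w' j * s j \<le> (3/2) * w j * ((11/10) * v j)"
          by (rule mult_mono) (use wr[OF jm] sl[OF jm] w_nn[of j] s_nn[of j] in auto)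
      qed
      also have "\<dots> = (33/20) * (\<Sum>j=1..m. w j * v j)" by (simp add: sum_distrib_left algebra_simps)
      finally show ?thesis .
    qed
    have X1: "Gs / 4 \<le> Xs" using Xl e2 Gs_pos unfolding m_def by linarith
    have X2: "Xs \<le> 9/4 * Gs" using Xu wsum_le[of m] Gs_pos by linarith
    have l1: "sqrt (Gs / 4) \<le> sqrt Xs" using X1 by (rule real_sqrt_le_mono)
    have l2: "sqrt Xs \<le> sqrt (9/4 * Gs)" using X2 by (rule real_sqrt_le_mono)
    have l3: "sqrt (Gs / 4) = \<gamma> / 2" by (simp add: \<gamma>_eq real_sqrt_divide)
    have l4: "sqrt (9/4 * Gs) = 3/2 * \<gamma>"
      by (simp add: \<gamma>_eq real_sqrt_mult real_sqrt_divide)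
    have "\<gamma> / 2 \<le> sqrt Xs" using l1 l3 by linarith
    moreover have "sqrt Xs \<le> 3/2 * \<gamma>" using l2 l4 by linarith
    ultimately have "\<bar>sqrt Xs - \<gamma>\<bar> \<le> \<gamma> / 2" unfolding abs_le_iff by linarith
    thus ?thesis using p3 dX unfolding m_def by simp
  qed
  have conv: "(\<lambda>n. P.prob (T n)) \<longlonglongrightarrow> 1" if Ts: "\<And>n. T n \<in> sets M"
    and sub: "\<And>n \<omega>. n \<ge> 2 \<Longrightarrow> (9/10) * V < (\<Sum>j=1..mcut \<epsilon>1 n. v j) \<Longrightarrow> Gs / 2 < (\<Sum>j=1..mcut \<epsilon>1 n. w j * v j)
       \<Longrightarrow> \<omega> \<in> space M \<Longrightarrow> \<forall>j\<in>{1..mcut \<epsilon>1 n}. \<bar>sample_var Y u n j \<omega> - v j\<bar> \<le> 1/10 * v j \<Longrightarrow> \<omega> \<in> T n" for T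
  proof (rule tendsto_sandwich[OF _ _ part2[of "1/10"] tendsto_const])
    show "eventually (\<lambda>n. 1 - 4 * C / (1/10)\<^sup>2 * real n powr (-\<epsilon>1) \<le> P.prob (T n)) sequentially"
      using ev1 ev2 eventually_ge_at_top[of 2]
    proof eventually_elim
      case (elim n)
      have "1 - 4 * C / (1/10)\<^sup>2 * real n powr (-\<epsilon>1) \<le> P.prob {\<omega> \<in> space M. \<forall>j\<in>{1..mcut \<epsilon>1 n}. \<bar>sample_var Y u n j \<omega> - v j\<bar> \<le> 1/10 * v j}"
        using part1[of "1/10" n] elim by simp
      also have "\<dots> \<le> P.prob (T n)" by (rule P.finite_measure_mono) (use sub elim Ts in auto)
      finally show ?case .
    qed
    show "eventually (\<lambda>n. P.prob (T n) \<le> 1) sequentially" by simp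
  qed
  have main: "(\<forall>\<eta>>0. \<forall>n\<ge>2.
            measure M {\<omega> \<in> space M. \<forall>j\<in>{1..mcut \<epsilon>1 n}.
                 \<bar>sample_var Y u n j \<omega> - v j\<bar> \<le> \<eta> * v j}
              \<ge> 1 - 4 * C / \<eta>\<^sup>2 * real n powr (-\<epsilon>1))
       \<and> (\<forall>\<eta>>0. (\<lambda>n. 1 - 4 * C / \<eta>\<^sup>2 * real n powr (-\<epsilon>1)) \<longlonglongrightarrow> 1)
       \<and> ((\<lambda>n. measure M {\<omega> \<in> space M. \<forall>j\<in>{1..mcut \<epsilon>1 n}.
                 d j / 2 \<le> rand_weight \<sigma> \<epsilon>1 \<epsilon>2 Y u n j \<omega>
                 \<and> rand_weight \<sigma> \<epsilon>1 \<epsilon>2 Y u n j \<omega> \<le> 2 * d j}) \<longlonglongrightarrow> 1)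
       \<and> ((\<lambda>n. measure M {\<omega> \<in> space M.
                 \<bar>sqrt (real n) * delta' \<sigma> \<epsilon>1 \<epsilon>2 Y u n \<omega> - \<gamma>\<bar> \<le> \<gamma> / 2}) \<longlonglongrightarrow> 1)"
  proof (intro conjI allI impI)
    show "\<And>\<eta> n. \<eta> > 0 \<Longrightarrow> n \<ge> 2 \<Longrightarrow> measure M {\<omega> \<in> space M. \<forall>j\<in>{1..mcut \<epsilon>1 n}.
                 \<bar>sample_var Y u n j \<omega> - v j\<bar> \<le> \<eta> * v j} \<ge> 1 - 4 * C / \<eta>\<^sup>2 * real n powr (-\<epsilon>1)"
      by (rule part1)
    show "\<And>\<eta>. (\<lambda>n. 1 - 4 * C / \<eta>\<^sup>2 * real n powr (-\<epsilon>1)) \<longlonglongrightarrow> 1" by (rule part2)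
    show "(\<lambda>n. measure M {\<omega> \<in> space M. \<forall>j\<in>{1..mcut \<epsilon>1 n}.
                 d j / 2 \<le> rand_weight \<sigma> \<epsilon>1 \<epsilon>2 Y u n j \<omega>
                 \<and> rand_weight \<sigma> \<epsilon>1 \<epsilon>2 Y u n j \<omega> \<le> 2 * d j}) \<longlonglongrightarrow> 1"
      by (rule conv) (use key in auto)
    show "(\<lambda>n. measure M {\<omega> \<in> space M.
                 \<bar>sqrt (real n) * delta' \<sigma> \<epsilon>1 \<epsilon>2 Y u n \<omega> - \<gamma>\<bar> \<le> \<gamma> / 2}) \<longlonglongrightarrow> 1"
      by (rule conv) (use key in auto)
  qed
  show ?thesis using main unfolding Let_def v_def V_def d_def \<gamma>_def .
qed


end
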